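(* Fix any $\epsilon<1/2$ and let $\zeta(r,n)=n^{-1/(\log n)^{\epsilon}}$. Then there is no infinite family of metafunnels that is up-to-$\zeta$ fixating.
   Context: Logarithms are natural. Moran process: given a directed graph $G$ and fitness $r>1$, one vertex (the initial mutant) is a mutant, the rest non-mutants. At each step a vertex $v$ is chosen with probability proportional to fitness (mutants $r$, non-mutants $1$), an out-neighbour $w$ of $v$ is chosen uniformly at random and the state of $v$ is copied to $w$. Extinction: eventually no mutants. An infinite family $\Upsilon$ of directed graphs is up-to-$\zeta$ fixating if for every $r>1$ there is $n_0$ such that for every $G\in\Upsilon$ with $n\ge n_0$ vertices, the extinction probability of the Moran process with fitness $r$ on $G$ from a uniformly random initial mutant is at most $\zeta(r,n)$. For positive integers $k,\ell,m$, the $(k,\ell,m)$-metafunnel has vertex set $V_0\cup V_1\cup\dots\cup V_k$ (disjoint), where $V_0=\{v^*\}$ and for $i\in[k]$, $V_i$ is the disjoint union of sets $V_{i,1},\dots,V_{i,\ell}$ each of size $m^i$; its edge set is $(V_0\times V_k)\cup(V_1\times V_0)\cup\bigcup_{i\in[k-1]}\bigcup_{j\in[\ell]}(V_{i+1,j}\times V_{i,j})$. An infinite family of metafunnels is an infinite set of such graphs. *)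

theory Defs
  imports Complex_Main
begin

type_synonym 'a digraph = "'a set \<times> ('a \<times> 'a) set"

definition out_nbrs :: "('a \<times> 'a) set \<Rightarrow> 'a \<Rightarrow> 'a set" where
  "out_nbrs E v = {w. (v, w) \<in> E}"

definition fitness :: "real \<Rightarrow> 'a set \<Rightarrow> 'a \<Rightarrow> real" where
  "fitness r S v = (if v \<in> S then r else 1)"

definition total_fitness :: "'a set \<Rightarrow> real \<Rightarrow> 'a set \<Rightarrow> real" where
  "total_fitness V r S = (\<Sum>v\<in>V. fitness r S v)"

text \<open>Probability that the Moran process (mutant set S) has reached extinction
  (no mutants) within t steps. A vertex without out-neighbours leaves the state unchanged
  (irrelevant for metafunnels, where every vertex has an out-neighbour).\<close>

fun ext_within :: "'a set \<Rightarrow> ('a \<times> 'a) set \<Rightarrow> real \<Rightarrow> nat \<Rightarrow> 'a set \<Rightarrow> real" where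
  "ext_within V E r 0 S = (if S = {} then 1 else 0)"
| "ext_within V E r (Suc t) S =
     (if S = {} then 1 else
      (\<Sum>v\<in>V. (fitness r S v / total_fitness V r S) *
         (if out_nbrs E v = {} then ext_within V E r t S
          else (\<Sum>w\<in>out_nbrs E v.
                  ext_within V E r t (if v \<in> S then insert w S else S - {w}) / real (card (out_nbrs E v))))))"

text \<open>Extinction probability: probability that eventually there are no mutants
  (the empty state is absorbing, so this is the supremum over t).\<close>

definition extinction_prob :: "'a set \<Rightarrow> ('a \<times> 'a) set \<Rightarrow> real \<Rightarrow> 'a set \<Rightarrow> real" where
  "extinction_prob V E r S = (SUP t. ext_within V E r t S)"

definition mean_extinction :: "real \<Rightarrow> 'a digraph \<Rightarrow> real" where
  "mean_extinction r G = (\<Sum>v\<in>fst G. extinction_prob (fst G) (snd G) r {v}) / real (card (fst G))"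

definition up_to_fixating :: "(real \<Rightarrow> nat \<Rightarrow> real) \<Rightarrow> 'a digraph set \<Rightarrow> bool" where
  "up_to_fixating \<zeta> \<Upsilon> \<longleftrightarrow> infinite \<Upsilon> \<and>
     (\<forall>r>1. \<exists>n0. \<forall>G\<in>\<Upsilon>. card (fst G) \<ge> n0 \<longrightarrow> mean_extinction r G \<le> \<zeta> r (card (fst G)))"

text \<open>Metafunnels. Vertex v* is (0,0,0); V_{i,j} = {(i,j,x) | x < m^i}.\<close>

definition mf_block :: "nat \<Rightarrow> nat \<Rightarrow> nat \<Rightarrow> (nat \<times> nat \<times> nat) set" where
  "mf_block m i j = {(i, j, x) | x. x < m ^ i}"

definition mf_layer :: "nat \<Rightarrow> nat \<Rightarrow> nat \<Rightarrow> (nat \<times> nat \<times> nat) set" where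
  "mf_layer l m i = (\<Union>j\<in>{1..l}. mf_block m i j)"

definition metafunnel :: "nat \<Rightarrow> nat \<Rightarrow> nat \<Rightarrow> (nat \<times> nat \<times> nat) digraph" where
  "metafunnel k l m =
     ({(0,0,0)} \<union> (\<Union>i\<in>{1..k}. mf_layer l m i),
      ({(0,0,0)} \<times> mf_layer l m k) \<union> (mf_layer l m 1 \<times> {(0,0,0)}) \<union>
      (\<Union>i\<in>{1..k-1}. \<Union>j\<in>{1..l}. mf_block m (Suc i) j \<times> mf_block m i j))"

definition is_metafunnel :: "(nat \<times> nat \<times> nat) digraph \<Rightarrow> bool" where
  "is_metafunnel G \<longleftrightarrow> (\<exists>k l m. 0 < k \<and> 0 < l \<and> 0 < m \<and> G = metafunnel k l m)"

end

theory Submission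
  imports Defs "HOL-Real_Asymp.Real_Asymp"
begin


definition nxt :: "'a set \<Rightarrow> 'a \<Rightarrow> 'a \<Rightarrow> 'a set" where
  "nxt S v w = (if v \<in> S then insert w S else S - {w})"

definition Ex :: "'a set \<Rightarrow> ('a\<times>'a) set \<Rightarrow> real \<Rightarrow> ('a set \<Rightarrow> real) \<Rightarrow> 'a set \<Rightarrow> real" where
  "Ex V E r f S = (\<Sum>v\<in>V. (fitness r S v / total_fitness V r S) *
      (\<Sum>w\<in>out_nbrs E v. f (nxt S v w) / real (card (out_nbrs E v))))"

locale mc =
  fixes V :: "'a set" and E :: "('a\<times>'a) set" and r :: real
  assumes finV: "finite V" and neV: "V \<noteq> {}"
    and outne: "\<And>v. v \<in> V \<Longrightarrow> out_nbrs E v \<noteq> {}"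
    and outsub: "\<And>v. v \<in> V \<Longrightarrow> out_nbrs E v \<subseteq> V"
    and rpos: "r > 0"
begin

lemma fin_out: "v \<in> V \<Longrightarrow> finite (out_nbrs E v)"
  using outsub finV finite_subset by blast

lemma card_out_pos: "v \<in> V \<Longrightarrow> card (out_nbrs E v) > 0"
  using fin_out outne card_gt_0_iff by blast

lemma fit_pos: "fitness r S v > 0"
  using rpos by (simp add: fitness_def)

lemma TF_pos: "total_fitness V r S > 0"
  unfolding total_fitness_def using finV neV fit_pos[of S] by (intro sum_pos) auto

lemma sum_fit: "(\<Sum>v\<in>V. fitness r S v / total_fitness V r S) = 1"
  using TF_pos[of S] by (simp add: sum_divide_distrib[symmetric] total_fitness_def)

lemma sum_out: "v \<in> V \<Longrightarrow> (\<Sum>w\<in>out_nbrs E v. c / real (card (out_nbrs E v))) = c"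
  using card_out_pos[of v] by simp

lemma ext_Suc: "S \<noteq> {} \<Longrightarrow> ext_within V E r (Suc t) S = Ex V E r (ext_within V E r t) S"
  unfolding Ex_def nxt_def using outne by (auto intro!: sum.cong)

lemma ext_empty: "ext_within V E r t {} = 1"
  by (cases t) auto

lemma nxt_sub: "S \<subseteq> V \<Longrightarrow> v \<in> V \<Longrightarrow> w \<in> out_nbrs E v \<Longrightarrow> nxt S v w \<subseteq> V"
  unfolding nxt_def using outsub by auto

lemma Ex_mono:
  assumes "S \<subseteq> V" "\<And>S'. S' \<subseteq> V \<Longrightarrow> f S' \<le> g S'"
  shows "Ex V E r f S \<le> Ex V E r g S"
  unfolding Ex_def
proof (rule sum_mono)
  fix v assume v: "v \<in> V"
  have "(\<Sum>w\<in>out_nbrs E v. f (nxt S v w) / real (card (out_nbrs E v)))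
     \<le> (\<Sum>w\<in>out_nbrs E v. g (nxt S v w) / real (card (out_nbrs E v)))"
    by (rule sum_mono) (use assms nxt_sub v in \<open>auto intro: divide_right_mono\<close>)
  then show "fitness r S v / total_fitness V r S * (\<Sum>w\<in>out_nbrs E v. f (nxt S v w) / real (card (out_nbrs E v)))
     \<le> fitness r S v / total_fitness V r S * (\<Sum>w\<in>out_nbrs E v. g (nxt S v w) / real (card (out_nbrs E v)))"
    using fit_pos[of S v] TF_pos[of S] by (intro mult_left_mono) auto
qed

lemma Ex_const: "Ex V E r (\<lambda>_. c) S = c"
proof -
  have "Ex V E r (\<lambda>_. c) S = (\<Sum>v\<in>V. (fitness r S v / total_fitness V r S) * c)"
    unfolding Ex_def by (intro sum.cong refl) (use sum_out in auto)
  also have "\<dots> = (\<Sum>v\<in>V. fitness r S v / total_fitness V r S) * c" by (simp add: sum_distrib_right)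
  also have "\<dots> = c" using sum_fit[of S] by simp
  finally show ?thesis .
qed

lemma Ex_add: "Ex V E r (\<lambda>S'. f S' + g S') S = Ex V E r f S + Ex V E r g S"
  unfolding Ex_def by (simp add: add_divide_distrib sum.distrib distrib_left)

lemma Ex_cmult: "Ex V E r (\<lambda>S'. c * f S') S = c * Ex V E r f S"
  unfolding Ex_def by (simp add: sum_distrib_left algebra_simps)

lemma Ex_diff: "Ex V E r (\<lambda>S'. f S' - g S') S = Ex V E r f S - Ex V E r g S"
  unfolding Ex_def by (simp add: diff_divide_distrib sum_subtractf right_diff_distrib)

lemma Ex_V: "Ex V E r f V = f V"
proof -
  have "Ex V E r f V = Ex V E r (\<lambda>_. f V) V"
    unfolding Ex_def nxt_def using outsub
    by (intro sum.cong refl arg_cong2[where f="(*)"] sum.cong) (auto simp: insert_absorb subset_iff)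
  then show ?thesis by (simp add: Ex_const)
qed

lemma ext_bounds: "S \<subseteq> V \<Longrightarrow> 0 \<le> ext_within V E r t S \<and> ext_within V E r t S \<le> 1"
proof (induction t arbitrary: S)
  case 0 then show ?case by simp
next
  case (Suc t)
  show ?case
  proof (cases "S = {}")
    case True then show ?thesis by simp
  next
    case False
    have "Ex V E r (\<lambda>_. 0) S \<le> Ex V E r (ext_within V E r t) S"
      by (rule Ex_mono) (use Suc in auto)
    moreover have "Ex V E r (ext_within V E r t) S \<le> Ex V E r (\<lambda>_. 1) S"
      by (rule Ex_mono) (use Suc in auto)
    ultimately show ?thesis using False ext_Suc[OF False, of t] by (simp add: Ex_const)
  qed
qed

lemma ext_prob_ge:
  assumes "S \<subseteq> V" shows "extinction_prob V E r S \<ge> ext_within V E r t S"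
  unfolding extinction_prob_def
  by (rule cSUP_upper) (use ext_bounds[OF assms] in \<open>auto intro!: bdd_aboveI[where M=1]\<close>)

lemma ext_prob_nonneg: "S \<subseteq> V \<Longrightarrow> extinction_prob V E r S \<ge> 0"
  using ext_prob_ge[of S 0] ext_bounds[of S 0] by linarith

lemma potential_lower:
  fixes \<phi> :: "'a set \<Rightarrow> real"
  assumes p0: "\<phi> {} \<le> 1" and pV: "\<phi> V \<le> 0" and g: "\<gamma> > 0"
    and drift: "\<And>S. S \<subseteq> V \<Longrightarrow> S \<noteq> {} \<Longrightarrow> S \<noteq> V \<Longrightarrow> Ex V E r \<phi> S \<ge> \<phi> S + \<gamma>"
    and S0: "S0 \<subseteq> V" "S0 \<noteq> {}"
  shows "extinction_prob V E r S0 \<ge> \<phi> S0"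
proof -
  have finP: "finite (\<phi> ` Pow V)" using finV by simp
  define \<Phi> where "\<Phi> = Max (\<phi> ` Pow V)"
  have Phi: "S \<subseteq> V \<Longrightarrow> \<phi> S \<le> \<Phi>" for S unfolding \<Phi>_def using finP by (intro Max_ge) auto
  define \<delta> where "\<delta> t = max 0 (\<Phi> - real t * \<gamma>)" for t :: nat
  have claim: "\<forall>S. S \<subseteq> V \<longrightarrow> S \<noteq> {} \<longrightarrow> ext_within V E r t S \<ge> \<phi> S - \<delta> t" for t
  proof (induction t)
    case 0 have "\<phi> S - \<Phi> \<le> 0" if "S \<subseteq> V" for S using Phi[OF that] by simp
    then show ?case by (auto simp: \<delta>_def intro: order_trans[OF _ max.cobounded2])
  next
    case (Suc t)
    show ?case
    proof (intro allI impI)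
      fix S assume S: "S \<subseteq> V" "S \<noteq> {}"
      show "ext_within V E r (Suc t) S \<ge> \<phi> S - \<delta> (Suc t)"
      proof (cases "S = V")
        case True
        have "\<delta> (Suc t) \<ge> 0" by (simp add: \<delta>_def)
        then show ?thesis using True pV ext_bounds[of V "Suc t"] by auto
      next
        case False
        have pt: "\<phi> S' - \<delta> t \<le> ext_within V E r t S'" if S'V: "S' \<subseteq> V" for S'
        proof (cases "S' = {}")
          case True then show ?thesis using p0 by (simp add: \<delta>_def ext_empty)
        next
          case False then show ?thesis using Suc S'V by auto
        qed
        have "Ex V E r (\<lambda>S'. \<phi> S' - \<delta> t) S \<le> Ex V E r (ext_within V E r t) S"
          by (rule Ex_mono[OF S(1)]) (use pt in auto)
        moreover have "Ex V E r (\<lambda>S'. \<phi> S' - \<delta> t) S = Ex V E r \<phi> S - \<delta> t"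
          using Ex_diff[of \<phi> "\<lambda>_. \<delta> t" S] by (simp add: Ex_const)
        moreover have "\<delta> (Suc t) \<ge> \<delta> t - \<gamma>"
          unfolding \<delta>_def of_nat_Suc distrib_right using g
          by (cases "\<Phi> - real t * \<gamma> \<ge> 0"; cases "\<Phi> - (real t * \<gamma> + 1 * \<gamma>) \<ge> 0") (simp_all add: max_def)
        ultimately show ?thesis using drift[OF S False] ext_Suc[OF S(2), of t] by linarith
      qed
    qed
  qed
  obtain t :: nat where t: "real t \<ge> \<Phi> / \<gamma>" using real_arch_simple by blast
  have "real t * \<gamma> \<ge> \<Phi>" using t g by (simp add: field_simps)
  then have "\<delta> t = 0" by (simp add: \<delta>_def)
  then have "ext_within V E r t S0 \<ge> \<phi> S0" using claim[of t] S0 by simp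
  then show ?thesis using ext_prob_ge[OF S0(1), of t] by linarith
qed

lemma combo_lower:
  fixes \<psi> h :: "'a set \<Rightarrow> real"
  assumes psi0: "\<psi> {} = 1" and psiV: "\<psi> V \<ge> 0" and h0: "h {} = 0" and hV: "h V \<ge> 0"
    and beta: "\<beta> \<ge> 0" and g: "\<gamma> > 0"
    and drift: "\<And>S. S \<subseteq> V \<Longrightarrow> S \<noteq> {} \<Longrightarrow> S \<noteq> V \<Longrightarrow>
        Ex V E r \<psi> S + \<beta> * Ex V E r h S \<ge> \<psi> S + \<beta> * h S + \<gamma>"
    and S0: "S0 \<subseteq> V" "S0 \<noteq> {}"
  shows "extinction_prob V E r S0 \<ge> \<psi> S0 - \<psi> V - \<beta> * (h V - h S0)"
proof -
  define \<phi> where "\<phi> S = (if S = {} then 1 else \<psi> S - \<psi> V - \<beta> * (h V - h S))" for S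
  define \<chi> where "\<chi> S = (\<psi> S + \<beta> * h S) - (\<psi> V + \<beta> * h V)" for S
  have ex\<chi>: "Ex V E r \<chi> S = (Ex V E r \<psi> S + \<beta> * Ex V E r h S) - (\<psi> V + \<beta> * h V)" for S
    unfolding \<chi>_def by (simp add: Ex_diff Ex_add Ex_cmult Ex_const)
  have le: "\<chi> S' \<le> \<phi> S'" for S'
  proof (cases "S' = {}")
    case True
    have "0 \<le> \<beta> * h V" using beta hV by simp
    then show ?thesis using True psiV h0 psi0 by (simp add: \<chi>_def \<phi>_def)
  next
    case False then show ?thesis by (simp add: \<chi>_def \<phi>_def algebra_simps)
  qed
  have "extinction_prob V E r S0 \<ge> \<phi> S0"
  proof (rule potential_lower[OF _ _ g _ S0])
    show "\<phi> {} \<le> 1" by (simp add: \<phi>_def)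
    show "\<phi> V \<le> 0" using neV by (simp add: \<phi>_def)
    fix S assume S: "S \<subseteq> V" "S \<noteq> {}" "S \<noteq> V"
    have "Ex V E r \<chi> S \<le> Ex V E r \<phi> S" by (rule Ex_mono[OF S(1)]) (simp add: le)
    then show "Ex V E r \<phi> S \<ge> \<phi> S + \<gamma>"
      using drift[OF S] ex\<chi>[of S] S(2) by (simp add: \<phi>_def algebra_simps)
  qed
  then show ?thesis using S0 by (simp add: \<phi>_def)
qed

lemma Ex_minus: "Ex V E r f S - f S = (1 / total_fitness V r S) *
    (\<Sum>v\<in>V. (fitness r S v / real (card (out_nbrs E v))) * (\<Sum>w\<in>out_nbrs E v. f (nxt S v w) - f S))"
proof -
  have "Ex V E r f S - f S = Ex V E r (\<lambda>S'. f S' - f S) S" by (simp add: Ex_diff Ex_const)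
  also have "\<dots> = (1 / total_fitness V r S) *
    (\<Sum>v\<in>V. (fitness r S v / real (card (out_nbrs E v))) * (\<Sum>w\<in>out_nbrs E v. f (nxt S v w) - f S))"
    unfolding Ex_def sum_distrib_left
    by (intro sum.cong refl) (simp add: sum_divide_distrib[symmetric])
  finally show ?thesis .
qed

definition Din :: "'a \<Rightarrow> real" where
  "Din x = (\<Sum>v\<in>V. if x \<in> out_nbrs E v then 1 / real (card (out_nbrs E v)) else 0)"

lemma single_drift:
  assumes x: "x \<in> V" and nl: "x \<notin> out_nbrs E x" and p: "0 \<le> p" "p * (Din x + r) \<le> Din x"
  shows "Ex V E r (\<lambda>S. if S = {} then 1 else if S = {x} then p else 0) {x} \<ge> p"
proof -
  let ?\<psi> = "\<lambda>S. if S = {} then 1 else if S = {x} then (p::real) else 0"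
  let ?TF = "total_fitness V r {x}"
  let ?d = "\<lambda>v. real (card (out_nbrs E v))"
  have inner: "(\<Sum>w\<in>out_nbrs E v. ?\<psi> (nxt {x} v w) / ?d v)
      = (if v = x then 0 else p + (1 - p) * (if x \<in> out_nbrs E v then 1 / ?d v else 0))" if v: "v \<in> V" for v
  proof (cases "v = x")
    case True
    have "?\<psi> (nxt {x} v w) = 0" if "w \<in> out_nbrs E v" for w
      using True nl that by (auto simp: nxt_def)
    then show ?thesis using True by simp
  next
    case False
    have e: "?\<psi> (nxt {x} v w) = p + (if w = x then 1 - p else 0)" for w
      using False by (auto simp: nxt_def)
    have "(\<Sum>w\<in>out_nbrs E v. ?\<psi> (nxt {x} v w) / ?d v)
        = (\<Sum>w\<in>out_nbrs E v. p / ?d v) + (\<Sum>w\<in>out_nbrs E v. (if w = x then 1 - p else 0) / ?d v)"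
      unfolding e by (simp add: add_divide_distrib sum.distrib)
    also have "(\<Sum>w\<in>out_nbrs E v. p / ?d v) = p" using sum_out[OF v] by simp
    also have "(\<Sum>w\<in>out_nbrs E v. (if w = x then 1 - p else 0) / ?d v)
        = (\<Sum>w\<in>out_nbrs E v. if w = x then (1 - p) / ?d v else 0)"
      by (intro sum.cong) auto
    also have "\<dots> = (if x \<in> out_nbrs E v then (1 - p) / ?d v else 0)"
      using fin_out[OF v] by simp
    finally show ?thesis using False by simp
  qed
  have fit: "fitness r {x} v = (if v = x then r else 1)" for v by (simp add: fitness_def)
  have "Ex V E r ?\<psi> {x} = (\<Sum>v\<in>V. (fitness r {x} v / ?TF) *
      (if v = x then 0 else p + (1 - p) * (if x \<in> out_nbrs E v then 1 / ?d v else 0)))"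
    unfolding Ex_def by (intro sum.cong refl) (simp add: inner)
  also have "\<dots> = (\<Sum>v\<in>V. (if v = x then 0 else p) + (1 - p) * (if x \<in> out_nbrs E v then 1 / ?d v else 0)) / ?TF"
    unfolding sum_divide_distrib using nl
    by (intro sum.cong refl) (auto simp: fit)
  also have "\<dots> = ((\<Sum>v\<in>V. if v = x then 0 else p) + (1 - p) * Din x) / ?TF"
    by (simp add: sum.distrib Din_def sum_distrib_left)
  also have "(\<Sum>v\<in>V. if v = x then 0 else p) = p * (real (card V) - 1)"
  proof -
    have "(\<Sum>v\<in>V. if v = x then 0 else p) = (\<Sum>v\<in>V. p - (if v = x then p else 0))"
      by (intro sum.cong) auto
    also have "\<dots> = p * real (card V) - p" using finV x by (simp add: sum_subtractf)
    finally show ?thesis by (simp add: algebra_simps)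
  qed
  also have "?TF = r + (real (card V) - 1)"
  proof -
    have "?TF = (\<Sum>v\<in>V. (if v = x then r - 1 else 0) + 1)"
      unfolding total_fitness_def by (intro sum.cong refl) (simp add: fit)
    also have "\<dots> = r - 1 + real (card V)" using finV x by (simp add: sum.distrib sum.If_cases)
    finally show ?thesis by simp
  qed
  finally have eq: "Ex V E r ?\<psi> {x} = (p * (real (card V) - 1) + (1 - p) * Din x) / (r + (real (card V) - 1))" .
  have cV: "real (card V) \<ge> 1" using finV x card_gt_0_iff by (metis Suc_leI empty_iff of_nat_1 of_nat_le_iff One_nat_def)
  have pos: "r + (real (card V) - 1) > 0" using rpos cV by linarith
  have "p * (r + (real (card V) - 1)) \<le> p * (real (card V) - 1) + (1 - p) * Din x"
    using p by (simp add: algebra_simps)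
  then show ?thesis unfolding eq using pos by (simp add: le_divide_eq)
qed

lemma nonneg_drift:
  assumes "S \<subseteq> V" "\<And>S'. f S' \<ge> 0" shows "Ex V E r f S \<ge> 0"
  using Ex_mono[of S "\<lambda>_. 0" f] assms by (simp add: Ex_const)

end



lemma mem_block[simp]: "(a,b,c) \<in> mf_block m i j \<longleftrightarrow> a = i \<and> b = j \<and> c < m ^ i"
  by (auto simp: mf_block_def)

lemma mem_layer[simp]: "(a,b,c) \<in> mf_layer l m i \<longleftrightarrow> a = i \<and> 1 \<le> b \<and> b \<le> l \<and> c < m ^ i"
  by (auto simp: mf_layer_def)

lemma block_eq: "mf_block m i j = (\<lambda>x. (i,j,x)) ` {..<m^i}"
  by (auto simp: mf_block_def)

lemma card_block: "card (mf_block m i j) = m ^ i"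
  unfolding block_eq by (subst card_image) (auto simp: inj_on_def)

lemma finite_block[simp]: "finite (mf_block m i j)"
  unfolding block_eq by simp

lemma finite_layer[simp]: "finite (mf_layer l m i)"
  unfolding mf_layer_def by simp

definition Q :: "(nat \<Rightarrow> real) \<Rightarrow> (nat \<Rightarrow> real) \<Rightarrow> bool \<Rightarrow> bool \<Rightarrow> nat \<Rightarrow> real" where
  "Q \<alpha> \<beta> bv bw i = (if bv \<and> \<not> bw then \<alpha> i else 0) + (if \<not> bv \<and> bw then \<beta> i else 0)"

lemma sum_if_count: "(\<Sum>x<M. if P x then A else B) = A * real (card {x. x < M \<and> P x}) + B * (real M - real (card {x. x < M \<and> P x}))"
proof -
  have "(\<Sum>x<M. if P x then A else B) = (\<Sum>x<M. B + (if P x then A - B else 0))"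
    by (intro sum.cong) auto
  also have "\<dots> = B * real M + (\<Sum>x<M. if P x then A - B else 0)"
    by (simp add: sum.distrib)
  also have "(\<Sum>x<M. if P x then A - B else 0) = (\<Sum>x\<in>{x\<in>{..<M}. P x}. A - B)"
    by (rule sum.inter_filter[symmetric]) simp
  also have "{x\<in>{..<M}. P x} = {x. x < M \<and> P x}" by auto
  finally show ?thesis by (simp add: algebra_simps)
qed

lemma alg1: "(M::real) \<noteq> 0 \<Longrightarrow> 1 / M * (r * a * (M - b) * (1 / M) + (c - a) * b * - (1 / M)) = r * (a * (M - b) / M / M) - (c - a) * b / M / M"
  by (simp add: field_simps)

lemma alg2: "(L::real) \<noteq> 0 \<Longrightarrow> Mk \<noteq> 0 \<Longrightarrow>
  (1/(L*Mk))*(r*s*(Mk - Xk)*(L*m) + (1-s)*Xk*-(L*m)) + (r*X1*(1-s)*1 + (m - X1)*s*-1) + (r*C1 - C2)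
  = r*(m/Mk*s*(Mk - Xk) + X1*(1-s) + C1) - (m/Mk*(1-s)*Xk + (m - X1)*s + C2)"
  by (simp add: field_simps)

lemma alg3: "(M::real) \<noteq> 0 \<Longrightarrow> m \<noteq> 0 \<Longrightarrow> a*(M-b)/M/M - (m*M - a)*b/M/M = a*m/(m*M) - b*m/M"
  by (simp add: field_simps)

lemma alg4: "(Mk::real) \<noteq> 0 \<Longrightarrow> m \<noteq> 0 \<Longrightarrow> C1 - C2 = Xk*m/Mk - X1*m/m \<Longrightarrow>
  m/Mk*s*(Mk - Xk) + X1*(1-s) + C1 - (m/Mk*(1-s)*Xk + (m - X1)*s + C2) = 0"
proof -
  assume a: "Mk \<noteq> 0" "m \<noteq> 0" "C1 - C2 = Xk*m/Mk - X1*m/m"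
  then have c: "C1 = C2 + Xk*m/Mk - X1" by simp
  show ?thesis unfolding c using a(1) by (simp add: field_simps)
qed

lemma chain_bound:
  fixes G L x :: "nat \<Rightarrow> real"
  assumes "1 \<le> k"
    and x: "\<And>i. 1 \<le> i \<Longrightarrow> i \<le> k \<Longrightarrow> 0 \<le> x i \<and> x i \<le> 1"
    and L: "\<And>i. 1 \<le> i \<Longrightarrow> i < k \<Longrightarrow> L i \<le> G (Suc i)"
    and G: "\<And>i. 1 \<le> i \<Longrightarrow> i < k \<Longrightarrow> G i \<le> G (Suc i)"
  shows "(\<Sum>i\<in>{1..<k}. G i * x i * (1 - x (Suc i)) - L i * x (Suc i) * (1 - x i)) \<ge> G 1 * x 1 - G k * x k"
proof -
  have "(\<Sum>i\<in>{1..<k}. G i * x i * (1 - x (Suc i)) - L i * x (Suc i) * (1 - x i))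
      \<ge> (\<Sum>i\<in>{1..<k}. (- G (Suc i) * x (Suc i)) - (- G i * x i))"
  proof (rule sum_mono)
    fix i assume i: "i \<in> {1..<k}"
    have xi: "0 \<le> x i" "x i \<le> 1" "0 \<le> x (Suc i)" "x (Suc i) \<le> 1" using x[of i] x[of "Suc i"] i by auto
    have "L i * (x (Suc i) * (1 - x i)) \<le> G (Suc i) * (x (Suc i) * (1 - x i))"
      using L[of i] i xi by (intro mult_right_mono) auto
    moreover have "(G (Suc i) - G i) * (x i * x (Suc i)) \<ge> 0" using G[of i] i xi by auto
    ultimately show "(- G (Suc i) * x (Suc i)) - (- G i * x i) \<le> G i * x i * (1 - x (Suc i)) - L i * x (Suc i) * (1 - x i)"
      by (simp add: algebra_simps)
  qed
  also have "(\<Sum>i\<in>{1..<k}. (- G (Suc i) * x (Suc i)) - (- G i * x i)) = (- G k * x k) - (- G 1 * x 1)"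
    using assms(1) by (rule sum_Suc_diff')
  finally show ?thesis by simp
qed

lemma algT: "(L::real) \<noteq> 0 \<Longrightarrow> M \<noteq> 0 \<Longrightarrow>
   1 / (L * M) * (r * sg * (M - X) * (- s) + (1 - sg) * X * c) = (1 - sg) * (X / M) * (c / L) - sg * (1 - X / M) * (r * s / L)"
  by (simp add: field_simps)

lemma algB: "(m::real) \<noteq> 0 \<Longrightarrow>
   r * X * (1 - sg) * (- s) + (m - X) * sg * c = sg * (1 - X / m) * (m * c) - (1 - sg) * (X / m) * (r * m * s)"
  by (simp add: field_simps)

lemma algC: "(M::real) \<noteq> 0 \<Longrightarrow> m \<noteq> 0 \<Longrightarrow>
   1 / M * (r * X' * (M - X) * (- s) + (m * M - X') * X * c)
   = (m * M * c) * (X / M) * (1 - X' / (m * M)) - (r * (m * M) * s) * (X' / (m * M)) * (1 - X / M)"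
  by (simp add: field_simps)

lemma limit_arg:
  fixes a b c d :: real
  assumes "\<And>e. e > 0 \<Longrightarrow> a \<ge> b - (c + e) * d" "d \<ge> 0"
  shows "a \<ge> b - c * d"
proof (rule ccontr)
  assume "\<not> ?thesis"
  then have g: "b - c * d - a > 0" by simp
  define e where "e = (b - c * d - a) / (2 * (d + 1))"
  have e: "e > 0" using g assms(2) by (simp add: e_def)
  have "e * d < b - c * d - a"
  proof -
    have "e * d \<le> e * (d + 1)" using e by simp
    also have "\<dots> = (b - c * d - a) / 2"
    proof -
      have "d + 1 \<noteq> 0" using assms(2) by simp
      then show ?thesis unfolding e_def by (simp add: field_simps)
    qed
    also have "\<dots> < b - c * d - a" using g by simp
    finally show ?thesis .
  qed
  then show False using assms(1)[OF e] by (simp add: algebra_simps)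
qed

locale mf =
  fixes k l m :: nat
  assumes kpos: "0 < k" and lpos: "0 < l" and mpos: "0 < m"
begin

definition V where "V = fst (metafunnel k l m)"
definition E where "E = snd (metafunnel k l m)"
definition vs :: "nat \<times> nat \<times> nat" where "vs = (0,0,0)"

lemma mem_V: "(a,b,c) \<in> V \<longleftrightarrow> (a = 0 \<and> b = 0 \<and> c = 0) \<or> (1 \<le> a \<and> a \<le> k \<and> 1 \<le> b \<and> b \<le> l \<and> c < m ^ a)"
  unfolding V_def metafunnel_def by auto

lemma vs_V: "vs \<in> V" by (simp add: vs_def mem_V)

lemma mem_E: "((a,b,c),(a',b',c')) \<in> E \<longleftrightarrow>
   (a = 0 \<and> b = 0 \<and> c = 0 \<and> a' = k \<and> 1 \<le> b' \<and> b' \<le> l \<and> c' < m ^ k) \<or>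
   (a = 1 \<and> 1 \<le> b \<and> b \<le> l \<and> c < m \<and> a' = 0 \<and> b' = 0 \<and> c' = 0) \<or>
   (2 \<le> a \<and> a \<le> k \<and> 1 \<le> b \<and> b \<le> l \<and> c < m ^ a \<and> a' = a - 1 \<and> b' = b \<and> c' < m ^ (a - 1))"
  unfolding E_def metafunnel_def
  apply (simp only: snd_conv Un_iff mem_Sigma_iff UN_iff)
  apply (rule iffI)
   apply (auto simp: mf_layer_def mf_block_def)[1]
  apply (elim disjE)
    apply (auto simp: mf_layer_def mf_block_def)[2]
  apply (rule disjI2)
  apply (rule bexI[where x="a - 1"])
   apply (rule bexI[where x="b"])
  by auto

lemma out_vs: "out_nbrs E vs = mf_layer l m k"
  unfolding out_nbrs_def vs_def by (auto simp: mem_E)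

lemma out_1: "1 \<le> j \<Longrightarrow> j \<le> l \<Longrightarrow> x < m \<Longrightarrow> out_nbrs E (1,j,x) = {vs}"
  unfolding out_nbrs_def vs_def by (auto simp: mem_E)

lemma out_Suc: "1 \<le> i \<Longrightarrow> i < k \<Longrightarrow> 1 \<le> j \<Longrightarrow> j \<le> l \<Longrightarrow> x < m ^ Suc i \<Longrightarrow>
    out_nbrs E (Suc i,j,x) = mf_block m i j"
  unfolding out_nbrs_def by (auto simp: mem_E)

lemma V_eq: "V = insert vs (\<Union>i\<in>{1..k}. \<Union>j\<in>{1..l}. mf_block m i j)"
  by (auto simp: mem_V vs_def)

lemma finV: "finite V" unfolding V_eq by simp

lemma outsub: "v \<in> V \<Longrightarrow> out_nbrs E v \<subseteq> V"
proof
  fix w assume "w \<in> out_nbrs E v"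
  then have "(v,w) \<in> E" by (simp add: out_nbrs_def)
  then show "w \<in> V" using kpos
    by (cases v; cases w) (auto simp: mem_E mem_V)
qed

lemma outne: "v \<in> V \<Longrightarrow> out_nbrs E v \<noteq> {}"
proof -
  assume v: "v \<in> V"
  obtain a b c where abc: "v = (a,b,c)" by (cases v) auto
  show ?thesis
  proof (cases "a = 0")
    case True
    then have "v = vs" using v abc by (auto simp: mem_V vs_def)
    moreover have "(k,1,0) \<in> mf_layer l m k" using lpos mpos by (simp add: Suc_le_eq)
    ultimately show ?thesis by (metis empty_iff out_vs)
  next
    case False
    then have a: "1 \<le> a" "a \<le> k" "1 \<le> b" "b \<le> l" "c < m ^ a" using v abc by (auto simp: mem_V)
    show ?thesis
    proof (cases "a = 1")
      case True then show ?thesis using a abc out_1[of b c] by simp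
    next
      case False
      then obtain i where i: "a = Suc i" "1 \<le> i" using a by (cases a) auto
      have "(i,b,0) \<in> mf_block m i b" using mpos by simp
      then show ?thesis using a i abc out_Suc[of i b c] by (metis Suc_le_eq empty_iff)
    qed
  qed
qed

lemma sum_blocks: "(\<Sum>v\<in>(\<Union>i\<in>I. \<Union>j\<in>J. mf_block m i j). F v)
    = (\<Sum>i\<in>I. \<Sum>j\<in>J. \<Sum>x<m^i. F (i,j,x))" if "finite I" "finite J"
proof -
  have "(\<Sum>v\<in>(\<Union>i\<in>I. \<Union>j\<in>J. mf_block m i j). F v) = (\<Sum>i\<in>I. \<Sum>v\<in>(\<Union>j\<in>J. mf_block m i j). F v)"
    using that by (intro sum.UNION_disjoint) auto
  also have "\<dots> = (\<Sum>i\<in>I. \<Sum>j\<in>J. \<Sum>v\<in>mf_block m i j. F v)"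
    using that by (intro sum.cong refl sum.UNION_disjoint) auto
  also have "\<dots> = (\<Sum>i\<in>I. \<Sum>j\<in>J. \<Sum>x<m^i. F (i,j,x))"
    unfolding block_eq by (intro sum.cong refl) (simp add: sum.reindex inj_on_def)
  finally show ?thesis .
qed

lemma sum_V: "(\<Sum>v\<in>V. F v) = F vs + (\<Sum>i\<in>{1..k}. \<Sum>j\<in>{1..l}. \<Sum>x<m^i. F (i,j,x))"
proof -
  have "vs \<notin> (\<Union>i\<in>{1..k}. \<Union>j\<in>{1..l}. mf_block m i j)" by (auto simp: vs_def mf_block_def)
  then show ?thesis unfolding V_eq by (simp add: sum_blocks)
qed

lemma layer_eq: "mf_layer l m i = (\<Union>i'\<in>{i}. \<Union>j\<in>{1..l}. mf_block m i' j)"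
  by (auto simp: mf_layer_def)

lemma sum_layer: "(\<Sum>v\<in>mf_layer l m i. F v) = (\<Sum>j\<in>{1..l}. \<Sum>x<m^i. F (i,j,x))"
  by (subst layer_eq, subst sum_blocks) auto

lemma card_layer: "card (mf_layer l m i) = l * m ^ i"
proof -
  have "card (mf_layer l m i) = (\<Sum>v\<in>mf_layer l m i. 1::nat)" by (rule card_eq_sum)
  also have "\<dots> = (\<Sum>j\<in>{1..l}. \<Sum>x<m^i. 1::nat)" by (rule sum_layer)
  also have "\<dots> = l * m ^ i" by simp
  finally show ?thesis .
qed

definition X :: "(nat\<times>nat\<times>nat) set \<Rightarrow> nat \<Rightarrow> nat \<Rightarrow> real" where
  "X S i j = real (card {x. x < m ^ i \<and> (i,j,x) \<in> S})"

definition sg :: "(nat\<times>nat\<times>nat) set \<Rightarrow> real" where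
  "sg S = (if vs \<in> S then 1 else 0)"

definition blk :: "real \<Rightarrow> (nat\<times>nat\<times>nat) set \<Rightarrow> (nat \<Rightarrow> real) \<Rightarrow> (nat \<Rightarrow> real) \<Rightarrow> nat \<Rightarrow> real" where
  "blk r S \<alpha> \<beta> j =
     (1 / (real l * real m ^ k)) * (r * sg S * (real m ^ k - X S k j) * \<alpha> k + (1 - sg S) * X S k j * \<beta> k)
   + (r * X S 1 j * (1 - sg S) * \<alpha> 0 + (real m - X S 1 j) * sg S * \<beta> 0)
   + (\<Sum>i\<in>{1..<k}. (1 / real m ^ i) * (r * X S (Suc i) j * (real m ^ i - X S i j) * \<alpha> i
        + (real m ^ Suc i - X S (Suc i) j) * X S i j * \<beta> i))"

lemma sumQ: "(\<Sum>x<m^i. Q \<alpha> \<beta> bv ((i,j,x) \<in> S) i) = (if bv then (real m ^ i - X S i j) * \<alpha> i else X S i j * \<beta> i)"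
proof (cases bv)
  case True
  then have "(\<Sum>x<m^i. Q \<alpha> \<beta> bv ((i,j,x) \<in> S) i) = (\<Sum>x<m^i. if (i,j,x) \<in> S then 0 else \<alpha> i)"
    by (intro sum.cong) (auto simp: Q_def)
  then show ?thesis using True by (simp add: sum_if_count X_def algebra_simps)
next
  case False
  then have "(\<Sum>x<m^i. Q \<alpha> \<beta> bv ((i,j,x) \<in> S) i) = (\<Sum>x<m^i. if (i,j,x) \<in> S then \<beta> i else 0)"
    by (intro sum.cong) (auto simp: Q_def)
  then show ?thesis using False by (simp add: sum_if_count X_def algebra_simps)
qed

lemma sum_1k: "(\<Sum>i\<in>{1..k}. H i) = H 1 + (\<Sum>i\<in>{1..<k}. H (Suc i))"
proof -
  have "(\<Sum>i\<in>{1..k}. H i) = H 1 + (\<Sum>i\<in>{Suc 1..k}. H i)" using kpos by (simp add: sum.atLeast_Suc_atMost)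
  also have "{Suc 1..k} = Suc ` {1..<k}" by (auto simp: image_iff)
  also have "(\<Sum>i\<in>Suc ` {1..<k}. H i) = (\<Sum>i\<in>{1..<k}. H (Suc i))"
  proof -
    have "inj_on Suc {1..<k}" by simp
    from sum.reindex[OF this, of H] show ?thesis by (simp only: o_def)
  qed
  finally show ?thesis .
qed

lemma EF: "(\<Sum>v\<in>V. fitness r S v / real (card (out_nbrs E v)) * (\<Sum>w\<in>out_nbrs E v. Q \<alpha> \<beta> (v \<in> S) (w \<in> S) (fst w)))
   = (\<Sum>j\<in>{1..l}. blk r S \<alpha> \<beta> j)"
proof -
  define G where "G v = fitness r S v / real (card (out_nbrs E v)) * (\<Sum>w\<in>out_nbrs E v. Q \<alpha> \<beta> (v \<in> S) (w \<in> S) (fst w))" for v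
  have fit: "fitness r S v = (if v \<in> S then r else 1)" for v by (simp add: fitness_def)
  have Gvs: "G vs = (\<Sum>j\<in>{1..l}. (1 / (real l * real m ^ k)) * (r * sg S * (real m ^ k - X S k j) * \<alpha> k + (1 - sg S) * X S k j * \<beta> k))"
  proof -
    have "G vs = fitness r S vs / (real l * real m ^ k) * (\<Sum>j\<in>{1..l}. \<Sum>x<m^k. Q \<alpha> \<beta> (vs \<in> S) ((k,j,x) \<in> S) k)"
      unfolding G_def out_vs card_layer sum_layer by simp
    also have "\<dots> = (\<Sum>j\<in>{1..l}. (1 / (real l * real m ^ k)) * (r * sg S * (real m ^ k - X S k j) * \<alpha> k + (1 - sg S) * X S k j * \<beta> k))"
      unfolding sumQ sum_distrib_left by (intro sum.cong refl) (auto simp: fit sg_def)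
    finally show ?thesis .
  qed
  have G1: "(\<Sum>x<m^1. G (1,j,x)) = r * X S 1 j * (1 - sg S) * \<alpha> 0 + (real m - X S 1 j) * sg S * \<beta> 0"
    if j: "j \<in> {1..l}" for j
  proof -
    have "(\<Sum>x<m^1. G (1,j,x)) = (\<Sum>x<m^1. if (1,j,x) \<in> S then r * (1 - sg S) * \<alpha> 0 else sg S * \<beta> 0)"
    proof (intro sum.cong refl)
      fix x assume x: "x \<in> {..<m^1}"
      have o: "out_nbrs E (1,j,x) = {vs}" using j x by (intro out_1) auto
      show "G (1,j,x) = (if (1,j,x) \<in> S then r * (1 - sg S) * \<alpha> 0 else sg S * \<beta> 0)"
        unfolding G_def o by (auto simp: fit Q_def sg_def vs_def)
    qed
    also have "\<dots> = r * X S 1 j * (1 - sg S) * \<alpha> 0 + (real m - X S 1 j) * sg S * \<beta> 0"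
      by (simp add: sum_if_count X_def algebra_simps)
    finally show ?thesis .
  qed
  have GS: "(\<Sum>x<m^Suc i. G (Suc i,j,x)) = (1 / real m ^ i) * (r * X S (Suc i) j * (real m ^ i - X S i j) * \<alpha> i
        + (real m ^ Suc i - X S (Suc i) j) * X S i j * \<beta> i)"
    if j: "j \<in> {1..l}" and i: "i \<in> {1..<k}" for i j
  proof -
    have "(\<Sum>x<m^Suc i. G (Suc i,j,x)) = (\<Sum>x<m^Suc i. if (Suc i,j,x) \<in> S then r * (real m ^ i - X S i j) * \<alpha> i / real m ^ i
        else X S i j * \<beta> i / real m ^ i)"
    proof (intro sum.cong refl)
      fix x assume x: "x \<in> {..<m ^ Suc i}"
      have "out_nbrs E (Suc i, j, x) = mf_block m i j" using i j x by (intro out_Suc) auto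
      moreover have "(\<Sum>w\<in>mf_block m i j. Q \<alpha> \<beta> b (w \<in> S) (fst w)) = (\<Sum>y<m^i. Q \<alpha> \<beta> b ((i,j,y) \<in> S) i)" for b
        unfolding block_eq by (simp add: sum.reindex inj_on_def)
      ultimately show "G (Suc i, j, x) = (if (Suc i,j,x) \<in> S then r * (real m ^ i - X S i j) * \<alpha> i / real m ^ i
        else X S i j * \<beta> i / real m ^ i)"
        unfolding G_def by (simp add: sumQ card_block fit)
    qed
    also have "\<dots> = (1 / real m ^ i) * (r * X S (Suc i) j * (real m ^ i - X S i j) * \<alpha> i
        + (real m ^ Suc i - X S (Suc i) j) * X S i j * \<beta> i)"
      by (simp add: sum_if_count X_def algebra_simps diff_divide_distrib add_divide_distrib)
    finally show ?thesis .
  qed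
  have "(\<Sum>v\<in>V. G v) = G vs + (\<Sum>i\<in>{1..k}. \<Sum>j\<in>{1..l}. \<Sum>x<m^i. G (i,j,x))" by (rule sum_V)
  also have "(\<Sum>i\<in>{1..k}. \<Sum>j\<in>{1..l}. \<Sum>x<m^i. G (i,j,x)) = (\<Sum>j\<in>{1..l}. \<Sum>i\<in>{1..k}. \<Sum>x<m^i. G (i,j,x))"
    by (rule sum.swap)
  also have "\<dots> = (\<Sum>j\<in>{1..l}. (\<Sum>x<m^1. G (1,j,x)) + (\<Sum>i\<in>{1..<k}. \<Sum>x<m^Suc i. G (Suc i,j,x)))"
    by (simp only: sum_1k)
  also have "\<dots> = (\<Sum>j\<in>{1..l}. (r * X S 1 j * (1 - sg S) * \<alpha> 0 + (real m - X S 1 j) * sg S * \<beta> 0)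
      + (\<Sum>i\<in>{1..<k}. (1 / real m ^ i) * (r * X S (Suc i) j * (real m ^ i - X S i j) * \<alpha> i
        + (real m ^ Suc i - X S (Suc i) j) * X S i j * \<beta> i)))"
    by (intro sum.cong refl arg_cong2[where f="(+)"]) (simp_all add: G1[simplified] GS[simplified])
  finally show ?thesis unfolding G_def[symmetric] Gvs blk_def by (simp add: sum.distrib add.assoc)
qed

lemma mc: "r > 0 \<Longrightarrow> mc V E r"
  by unfold_locales (use finV vs_V outne outsub in auto)

lemma X_le: "X S i j \<le> real m ^ i"
proof -
  have "card {x. x < m ^ i \<and> (i,j,x) \<in> S} \<le> card {..<m^i}" by (intro card_mono) auto
  then show ?thesis by (simp add: X_def flip: of_nat_power)
qed

lemma X_ge: "X S i j \<ge> 0" by (simp add: X_def)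

lemma Ex_Q:
  assumes r: "r > 0" and S: "S \<subseteq> V"
    and step: "\<And>v w. v \<in> V \<Longrightarrow> w \<in> out_nbrs E v \<Longrightarrow> f (nxt S v w) - f S = c * Q \<alpha> \<beta> (v \<in> S) (w \<in> S) (fst w)"
  shows "Ex V E r f S - f S = c / total_fitness V r S * (\<Sum>j\<in>{1..l}. blk r S \<alpha> \<beta> j)"
proof -
  interpret mc V E r by (rule mc[OF r])
  have "Ex V E r f S - f S = (1 / total_fitness V r S) *
    (\<Sum>v\<in>V. (fitness r S v / real (card (out_nbrs E v))) * (\<Sum>w\<in>out_nbrs E v. c * Q \<alpha> \<beta> (v \<in> S) (w \<in> S) (fst w)))"
    unfolding Ex_minus by (intro arg_cong2[where f="(*)"] refl sum.cong) (auto simp: step)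
  also have "\<dots> = c / total_fitness V r S *
    (\<Sum>v\<in>V. (fitness r S v / real (card (out_nbrs E v))) * (\<Sum>w\<in>out_nbrs E v. Q \<alpha> \<beta> (v \<in> S) (w \<in> S) (fst w)))"
  proof -
    have "(\<Sum>v\<in>V. (fitness r S v / real (card (out_nbrs E v))) * (\<Sum>w\<in>out_nbrs E v. c * Q \<alpha> \<beta> (v \<in> S) (w \<in> S) (fst w)))
      = c * (\<Sum>v\<in>V. (fitness r S v / real (card (out_nbrs E v))) * (\<Sum>w\<in>out_nbrs E v. Q \<alpha> \<beta> (v \<in> S) (w \<in> S) (fst w)))"
      unfolding sum_distrib_left[of c] by (intro sum.cong refl) (simp add: sum_distrib_left mult_ac)
    then show ?thesis by simp
  qed
  finally show ?thesis unfolding EF .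
qed

definition pw :: "nat \<Rightarrow> real" where
  "pw i = (if i = 0 then 1 else if i = k then real l * real m else 1 / real m ^ i)"

definition hh :: "(nat\<times>nat\<times>nat) set \<Rightarrow> real" where
  "hh S = (\<Sum>v\<in>S. pw (fst v))"

lemma pw_pos: "pw i > 0" using lpos mpos by (simp add: pw_def)

lemma hh_step: "S \<subseteq> V \<Longrightarrow> hh (nxt S v w) - hh S = 1 * Q pw (\<lambda>i. - pw i) (v \<in> S) (w \<in> S) (fst w)"
proof -
  assume "S \<subseteq> V"
  then have fS: "finite S" using finV finite_subset by blast
  show ?thesis
  proof (cases "v \<in> S")
    case True
    then show ?thesis
      by (cases "w \<in> S") (simp_all add: nxt_def hh_def Q_def fS insert_absorb)
  next
    case False
    then show ?thesis
      by (cases "w \<in> S") (simp_all add: nxt_def hh_def Q_def fS sum_diff1)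
  qed
qed

definition OC :: "(nat\<times>nat\<times>nat) set \<Rightarrow> nat \<Rightarrow> real" where
  "OC S j = real m / real m ^ k * sg S * (real m ^ k - X S k j) + X S 1 j * (1 - sg S)
     + (\<Sum>i\<in>{1..<k}. X S (Suc i) j * (real m ^ i - X S i j) / real m ^ i / real m ^ i)"

lemma blk_hh: "blk r S pw (\<lambda>i. - pw i) j = (r - 1) * OC S j"
proof -
  define IC where "IC = real m / real m ^ k * (1 - sg S) * X S k j + (real m - X S 1 j) * sg S
     + (\<Sum>i\<in>{1..<k}. (real m ^ Suc i - X S (Suc i) j) * X S i j / real m ^ i / real m ^ i)"
  have mk: "real m ^ k > 0" "real m > 0" using mpos by auto
  have chain: "(\<Sum>i\<in>{1..<k}. (1 / real m ^ i) * (r * X S (Suc i) j * (real m ^ i - X S i j) * pw i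
        + (real m ^ Suc i - X S (Suc i) j) * X S i j * - pw i))
     = r * (\<Sum>i\<in>{1..<k}. X S (Suc i) j * (real m ^ i - X S i j) / real m ^ i / real m ^ i)
       - (\<Sum>i\<in>{1..<k}. (real m ^ Suc i - X S (Suc i) j) * X S i j / real m ^ i / real m ^ i)"
    unfolding sum_distrib_left sum_subtractf[symmetric]
  proof (intro sum.cong refl)
    fix i assume i: "i \<in> {1..<k}"
    then have p: "pw i = 1 / real m ^ i" by (simp add: pw_def)
    show "1 / real m ^ i * (r * X S (Suc i) j * (real m ^ i - X S i j) * pw i + (real m ^ Suc i - X S (Suc i) j) * X S i j * - pw i)
       = r * (X S (Suc i) j * (real m ^ i - X S i j) / real m ^ i / real m ^ i)
         - (real m ^ Suc i - X S (Suc i) j) * X S i j / real m ^ i / real m ^ i"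
      unfolding p using mpos by (intro alg1) simp
  qed
  have pk: "pw k = real l * real m" "pw 0 = 1" using kpos by (auto simp: pw_def)
  have b1: "blk r S pw (\<lambda>i. - pw i) j = r * OC S j - IC"
    unfolding blk_def chain OC_def IC_def pk using lpos mk by (intro alg2) auto
  define z where "z i = X S i j * real m / real m ^ i" for i
  have tel: "(\<Sum>i\<in>{1..<k}. X S (Suc i) j * (real m ^ i - X S i j) / real m ^ i / real m ^ i)
     - (\<Sum>i\<in>{1..<k}. (real m ^ Suc i - X S (Suc i) j) * X S i j / real m ^ i / real m ^ i)
     = (\<Sum>i\<in>{1..<k}. z (Suc i) - z i)"
    unfolding sum_subtractf[symmetric] z_def
  proof (intro sum.cong refl)
    fix i assume "i \<in> {1..<k}"
    show "X S (Suc i) j * (real m ^ i - X S i j) / real m ^ i / real m ^ i -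
         (real m ^ Suc i - X S (Suc i) j) * X S i j / real m ^ i / real m ^ i =
         X S (Suc i) j * real m / real m ^ Suc i - X S i j * real m / real m ^ i"
      unfolding power_Suc by (rule alg3) (use mk in auto)
  qed
  have "(\<Sum>i\<in>{1..<k}. z (Suc i) - z i) = z k - z 1" using kpos by (intro sum_Suc_diff') simp
  then have "OC S j - IC = 0"
    unfolding OC_def IC_def using tel mk by (intro alg4) (auto simp: z_def)
  then show ?thesis using b1 by (simp add: algebra_simps)
qed


definition Xn :: "(nat\<times>nat\<times>nat) set \<Rightarrow> nat \<Rightarrow> nat \<Rightarrow> nat" where
  "Xn S i j = card {x. x < m ^ i \<and> (i,j,x) \<in> S}"

lemma X_Xn: "X S i j = real (Xn S i j)" by (simp add: X_def Xn_def)

lemma Xn_le: "Xn S i j \<le> m ^ i"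
proof -
  have "card {x. x < m ^ i \<and> (i,j,x) \<in> S} \<le> card {..<m^i}" by (intro card_mono) auto
  then show ?thesis by (simp add: Xn_def)
qed

lemma Xn_full: "Xn S i j = m ^ i \<Longrightarrow> x < m ^ i \<Longrightarrow> (i,j,x) \<in> S"
proof -
  assume a: "Xn S i j = m ^ i" "x < m ^ i"
  have "{x. x < m ^ i \<and> (i,j,x) \<in> S} = {..<m^i}"
    by (rule card_subset_eq) (use a in \<open>auto simp: Xn_def\<close>)
  then show ?thesis using a by auto
qed

lemma Xn_zero: "Xn S i j = 0 \<Longrightarrow> x < m ^ i \<Longrightarrow> (i,j,x) \<notin> S"
proof -
  assume a: "Xn S i j = 0" "x < m ^ i"
  have "finite {x. x < m ^ i \<and> (i,j,x) \<in> S}" by simp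
  then have "{x. x < m ^ i \<and> (i,j,x) \<in> S} = {}" using a(1) by (simp add: Xn_def)
  then show ?thesis using a by auto
qed

lemma cut_exists:
  assumes S: "S \<subseteq> V" "S \<noteq> {}" "S \<noteq> V"
  shows "\<exists>j\<in>{1..l}. (vs \<in> S \<and> Xn S k j < m ^ k) \<or> (vs \<notin> S \<and> Xn S 1 j \<ge> 1) \<or>
           (\<exists>i\<in>{1..<k}. Xn S (Suc i) j \<ge> 1 \<and> Xn S i j < m ^ i)"
proof (rule ccontr)
  assume "\<not> ?thesis"
  then have H: "\<And>j. j \<in> {1..l} \<Longrightarrow> (vs \<in> S \<longrightarrow> Xn S k j = m ^ k) \<and> (vs \<notin> S \<longrightarrow> Xn S 1 j = 0) \<and>
       (\<forall>i\<in>{1..<k}. Xn S (Suc i) j = 0 \<or> Xn S i j = m ^ i)"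
    using Xn_le by (metis le_neq_implies_less less_one not_le)
  have mp: "m ^ i > 0" for i using mpos by simp
  show False
  proof (cases "vs \<in> S")
    case True
    have full: "Xn S (k - d) j = m ^ (k - d)" if "d < k" "j \<in> {1..l}" for d j
      using that
    proof (induction d)
      case 0 then show ?case using H True by simp
    next
      case (Suc d)
      have "Xn S (Suc (k - Suc d)) j = m ^ Suc (k - Suc d)" using Suc by (simp add: Suc_diff_Suc)
      then have "Xn S (Suc (k - Suc d)) j \<noteq> 0" using mp by (metis less_numeral_extra(3))
      moreover have mem: "k - Suc d \<in> {1..<k}" using Suc by auto
      have h: "\<forall>i\<in>{1..<k}. Xn S (Suc i) j = 0 \<or> Xn S i j = m ^ i" using H[OF Suc(3)] by blast
      from h[rule_format, OF mem] calculation show ?case by simp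
    qed
    have "V \<subseteq> S"
    proof
      fix v assume v: "v \<in> V"
      obtain a b c where abc: "v = (a,b,c)" by (cases v) auto
      show "v \<in> S"
      proof (cases "a = 0")
        case True then show ?thesis using v abc \<open>vs \<in> S\<close> by (auto simp: mem_V vs_def)
      next
        case False
        then have a: "1 \<le> a" "a \<le> k" "b \<in> {1..l}" "c < m ^ a" using v abc by (auto simp: mem_V)
        have "Xn S (k - (k - a)) b = m ^ (k - (k - a))" using a by (intro full) auto
        then have "Xn S a b = m ^ a" using a by simp
        then show ?thesis using Xn_full a abc by blast
      qed
    qed
    then show False using S by auto
  next
    case False
    have empty: "Xn S (Suc d) j = 0" if "d < k" "j \<in> {1..l}" for d j
      using that
    proof (induction d)
      case 0 then show ?case using H False by simp
    next
      case (Suc d)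
      have "Suc d \<in> {1..<k}" using Suc by auto
      moreover have "Xn S (Suc d) j \<noteq> m ^ Suc d" using Suc mp by (metis less_numeral_extra(3) Suc_lessD)
      moreover have h: "\<forall>i\<in>{1..<k}. Xn S (Suc i) j = 0 \<or> Xn S i j = m ^ i" using H[OF Suc(3)] by blast
      ultimately show ?case by blast
    qed
    have "S \<subseteq> {}"
    proof
      fix v assume v: "v \<in> S"
      obtain a b c where abc: "v = (a,b,c)" by (cases v) auto
      have vV: "v \<in> V" using v S by auto
      show "v \<in> {}"
      proof (cases "a = 0")
        case True then show ?thesis using v vV abc False by (auto simp: mem_V vs_def)
      next
        case a0: False
        then have a: "1 \<le> a" "a \<le> k" "b \<in> {1..l}" "c < m ^ a" using vV abc by (auto simp: mem_V)
        have "Xn S (Suc (a - 1)) b = 0" using a by (intro empty) auto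
        then have "Xn S a b = 0" using a by simp
        then show ?thesis using Xn_zero a abc v by blast
      qed
    qed
    then show False using S by auto
  qed
qed


lemma sg01: "sg S = 0 \<or> sg S = 1" by (simp add: sg_def)

lemma OC_chain_nonneg: "i \<in> {1..<k} \<Longrightarrow> X S (Suc i) j * (real m ^ i - X S i j) / real m ^ i / real m ^ i \<ge> 0"
  using X_le[of S i j] X_ge[of S "Suc i" j] by simp

lemma OC_nonneg: "OC S j \<ge> 0"
proof -
  have "real m / real m ^ k * sg S * (real m ^ k - X S k j) \<ge> 0"
    using X_le[of S k j] sg01[of S] by auto
  moreover have "X S 1 j * (1 - sg S) \<ge> 0" using X_ge[of S 1 j] sg01[of S] by auto
  moreover have "(\<Sum>i\<in>{1..<k}. X S (Suc i) j * (real m ^ i - X S i j) / real m ^ i / real m ^ i) \<ge> 0"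
    by (intro sum_nonneg OC_chain_nonneg)
  ultimately show ?thesis unfolding OC_def by linarith
qed

lemma mpow_mono: "i \<le> k \<Longrightarrow> real m ^ i \<le> real m ^ k"
  using mpos by (intro power_increasing) auto

lemma OC_pos:
  assumes S: "S \<subseteq> V" "S \<noteq> {}" "S \<noteq> V"
  shows "(\<Sum>j\<in>{1..l}. OC S j) \<ge> 1 / real m ^ (2*k)"
proof -
  obtain j where j: "j \<in> {1..l}" and cut: "(vs \<in> S \<and> Xn S k j < m ^ k) \<or> (vs \<notin> S \<and> Xn S 1 j \<ge> 1) \<or>
           (\<exists>i\<in>{1..<k}. Xn S (Suc i) j \<ge> 1 \<and> Xn S i j < m ^ i)"
    using cut_exists[OF S] by blast
  have m1: "real m \<ge> 1" using mpos by simp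
  have mk1: "real m ^ i \<ge> 1" for i using m1 by (simp add: one_le_power)
  have e_le: "1 / real m ^ (2*k) \<le> 1 / real m ^ i" if "i \<le> 2*k" for i
    using mk1[of i] mpow_mono that m1 by (intro divide_left_mono) (auto intro: power_increasing)
  have X1: "X S k j \<le> real m ^ k - 1" if "Xn S k j < m ^ k"
  proof -
    have "Xn S k j + 1 \<le> m ^ k" using that by simp
    then have "real (Xn S k j) + 1 \<le> real (m ^ k)" by (metis of_nat_1 of_nat_add of_nat_le_iff)
    then show ?thesis by (simp add: X_Xn)
  qed
  have "OC S j \<ge> 1 / real m ^ (2*k)"
  proof -
    have c3: "(\<Sum>i\<in>{1..<k}. X S (Suc i) j * (real m ^ i - X S i j) / real m ^ i / real m ^ i) \<ge> 0"
      by (intro sum_nonneg OC_chain_nonneg)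
    have t1: "real m / real m ^ k * sg S * (real m ^ k - X S k j) \<ge> 0"
      using X_le[of S k j] sg01[of S] by auto
    have t2: "X S 1 j * (1 - sg S) \<ge> 0" using X_ge[of S 1 j] sg01[of S] by auto
    consider (a) "vs \<in> S" "Xn S k j < m ^ k" | (b) "vs \<notin> S" "Xn S 1 j \<ge> 1"
      | (c) i where "i \<in> {1..<k}" "Xn S (Suc i) j \<ge> 1" "Xn S i j < m ^ i" using cut by blast
    then show ?thesis
    proof cases
      case a
      have "real m ^ k - X S k j \<ge> 1" using X1[OF a(2)] by simp
      then have "real m * 1 \<le> real m * (real m ^ k - X S k j)" using m1 by (intro mult_left_mono) auto
      then have "real m / real m ^ k \<le> real m * (real m ^ k - X S k j) / real m ^ k"
        using mk1[of k] by (intro divide_right_mono) auto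
      then have "real m / real m ^ k * sg S * (real m ^ k - X S k j) \<ge> real m / real m ^ k"
        using a(1) by (simp add: sg_def)
      moreover have "real m / real m ^ k \<ge> 1 / real m ^ k" using m1 by (simp add: divide_right_mono)
      moreover have "1 / real m ^ (2*k) \<le> 1 / real m ^ k" by (rule e_le) simp
      ultimately show ?thesis using c3 t2 unfolding OC_def by linarith
    next
      case b
      have "X S 1 j * (1 - sg S) \<ge> 1" using b by (simp add: sg_def X_Xn)
      moreover have "1 / real m ^ (2*k) \<le> 1" using mk1[of "2*k"] by (simp add: divide_le_eq)
      ultimately show ?thesis using c3 t1 unfolding OC_def by linarith
    next
      case c
      have Xi: "X S i j \<le> real m ^ i - 1"
      proof -
        have "Xn S i j + 1 \<le> m ^ i" using c by simp
        then have "real (Xn S i j) + 1 \<le> real (m ^ i)" by (metis of_nat_1 of_nat_add of_nat_le_iff)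
        then show ?thesis by (simp add: X_Xn)
      qed
      have XS: "X S (Suc i) j \<ge> 1" using c by (simp add: X_Xn)
      have "X S (Suc i) j * (real m ^ i - X S i j) \<ge> 1 * 1"
        using Xi XS by (intro mult_mono) auto
      then have ti: "X S (Suc i) j * (real m ^ i - X S i j) / real m ^ i / real m ^ i \<ge> 1 / real m ^ (2*i)"
        using mk1[of i] by (simp add: divide_right_mono power_mult power2_eq_square divide_divide_eq_left
              flip: mult_2 power_add)
      have "(\<Sum>i\<in>{1..<k}. X S (Suc i) j * (real m ^ i - X S i j) / real m ^ i / real m ^ i)
          \<ge> X S (Suc i) j * (real m ^ i - X S i j) / real m ^ i / real m ^ i"
        by (rule member_le_sum) (use c OC_chain_nonneg in auto)
      moreover have "1 / real m ^ (2*k) \<le> 1 / real m ^ (2*i)" using c by (intro e_le) auto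
      ultimately show ?thesis using ti t1 t2 unfolding OC_def by linarith
    qed
  qed
  moreover have "(\<Sum>j\<in>{1..l}. OC S j) \<ge> OC S j"
    by (rule member_le_sum) (use j OC_nonneg in auto)
  ultimately show ?thesis by linarith
qed


lemma noloop: "x \<in> V \<Longrightarrow> x \<notin> out_nbrs E x"
  using kpos by (cases x) (auto simp: out_nbrs_def mem_E)

lemma Din_low:
  assumes x: "x \<in> V" "fst x < k" shows "mc.Din V E x \<ge> 1"
proof -
  interpret mc V E 1 using mc by simp
  have nn: "\<And>v. (if x \<in> out_nbrs E v then 1 / real (card (out_nbrs E v)) else 0) \<ge> 0" by simp
  obtain a b c where abc: "x = (a,b,c)" by (cases x) auto
  show ?thesis
  proof (cases "a = 0")
    case True
    then have xv: "x = vs" using x abc by (auto simp: mem_V vs_def)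
    have v1: "(1,1,0) \<in> V" using kpos lpos mpos by (simp add: mem_V)
    have o: "out_nbrs E (1,1,0) = {vs}" using lpos mpos by (intro out_1) auto
    have "1 \<le> (if x \<in> out_nbrs E (1,1,0) then 1 / real (card (out_nbrs E (1,1,0))) else 0)"
      using o xv by simp
    also have "\<dots> \<le> mc.Din V E x" unfolding Din_def
      by (rule member_le_sum[OF v1]) (use finV in auto)
    finally show ?thesis .
  next
    case False
    then have a: "1 \<le> a" "a < k" "1 \<le> b" "b \<le> l" "c < m ^ a" using x abc by (auto simp: mem_V)
    have sub: "mf_block m (Suc a) b \<subseteq> V" using a by (auto simp: mf_block_def mem_V)
    have "(\<Sum>v\<in>mf_block m (Suc a) b. if x \<in> out_nbrs E v then 1 / real (card (out_nbrs E v)) else 0)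
        = (\<Sum>v\<in>mf_block m (Suc a) b. 1 / real m ^ a)"
    proof (intro sum.cong refl)
      fix v assume v: "v \<in> mf_block m (Suc a) b"
      then obtain y where y: "v = (Suc a, b, y)" "y < m ^ Suc a" by (auto simp: mf_block_def)
      have "out_nbrs E v = mf_block m a b" unfolding y(1) using a y by (intro out_Suc) auto
      then show "(if x \<in> out_nbrs E v then 1 / real (card (out_nbrs E v)) else 0) = 1 / real m ^ a"
        using abc a by (simp add: card_block)
    qed
    also have "\<dots> = real m" using mpos by (simp add: card_block)
    finally have eqm: "(\<Sum>v\<in>mf_block m (Suc a) b. if x \<in> out_nbrs E v then 1 / real (card (out_nbrs E v)) else 0) = real m" .
    moreover have "(\<Sum>v\<in>mf_block m (Suc a) b. if x \<in> out_nbrs E v then 1 / real (card (out_nbrs E v)) else 0)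
       \<le> (\<Sum>v\<in>V. if x \<in> out_nbrs E v then 1 / real (card (out_nbrs E v)) else 0)"
      by (rule sum_mono2[OF finV sub]) simp
    ultimately have "real m \<le> mc.Din V E x" unfolding Din_def by simp
    then show ?thesis using mpos by linarith
  qed
qed

lemma card_V: "card V = 1 + l * (\<Sum>i\<in>{1..k}. m ^ i)"
proof -
  have "card V = (\<Sum>v\<in>V. 1::nat)" by simp
  also have "\<dots> = 1 + (\<Sum>i\<in>{1..k}. \<Sum>j\<in>{1..l}. \<Sum>x<m^i. 1::nat)" by (rule sum_V)
  also have "\<dots> = 1 + l * (\<Sum>i\<in>{1..k}. m ^ i)" by (simp add: sum_distrib_left)
  finally show ?thesis .
qed

lemma top_sub: "mf_layer l m k \<subseteq> V" using kpos by (auto simp: mf_layer_def mf_block_def mem_V)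

context
  fixes r :: real
  assumes r1: "r > 1"
begin

definition G0 :: real where "G0 = (2 * r ^ (k+1) - 1) / (real l * r ^ k)"
definition cw :: "nat \<Rightarrow> real" where
  "cw i = (if i = k then 2 * r ^ (k+1) - 1 else r ^ i * G0 / real m ^ Suc i)"
definition aw :: "nat \<Rightarrow> real" where "aw i = 1 / (1 + cw i)"
definition sw :: "nat \<Rightarrow> real" where "sw i = cw i / (1 + cw i)"
definition Gw :: "nat \<Rightarrow> real" where "Gw i = r ^ i * G0"
definition Lw :: "nat \<Rightarrow> real" where
  "Lw i = (if i = k then r * sw k / real l else r * real m ^ Suc i * sw i)"
definition xf :: "(nat\<times>nat\<times>nat) set \<Rightarrow> nat \<Rightarrow> nat \<Rightarrow> real" where
  "xf S i j = X S i j / real m ^ i"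

lemma rk: "r ^ i \<ge> 1" using r1 by (simp add: one_le_power)

lemma ck_ge: "2 * r ^ (k+1) - 1 \<ge> 1" using rk[of "k+1"] by simp

lemma G0_pos: "G0 > 0"
  using ck_ge lpos rk[of k] by (simp add: G0_def)

lemma cw_pos: "cw i > 0"
  using ck_ge G0_pos mpos rk[of i] by (auto simp: cw_def)

lemma sw_le: "sw i \<le> cw i" and sw_nonneg: "sw i \<ge> 0"
  using cw_pos[of i] by (auto simp: sw_def field_simps)

lemma aw_sw: "aw i - 1 = - sw i"
  using cw_pos[of i] by (simp add: aw_def sw_def field_simps)

lemma Gw_eq: "i < k \<Longrightarrow> Gw i = real m ^ Suc i * cw i" "Gw k = cw k / real l"
proof -
  have nz: "real m ^ Suc i \<noteq> 0" "r ^ k \<noteq> 0" "real l \<noteq> 0" using mpos lpos r1 by auto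
  show "i < k \<Longrightarrow> Gw i = real m ^ Suc i * cw i" using nz by (simp add: Gw_def cw_def)
  show "Gw k = cw k / real l" using nz by (simp add: Gw_def cw_def G0_def)
qed

lemma Lw_le: "i < k \<Longrightarrow> Lw i \<le> Gw (Suc i)"
proof -
  assume i: "i < k"
  have "Lw i = r * (real m ^ Suc i * sw i)" using i by (simp add: Lw_def)
  also have "\<dots> \<le> r * (real m ^ Suc i * cw i)" using sw_le[of i] r1 mpos by (intro mult_left_mono) auto
  also have "\<dots> = Gw (Suc i)" using Gw_eq(1)[OF i] by (simp add: Gw_def)
  finally show ?thesis .
qed

lemma Lk_eq: "Lw k = G0 / 2"
proof -
  have "Lw k = r * ((2 * r ^ (k+1) - 1) / (2 * r ^ (k+1))) / real l"
    using ck_ge by (simp add: Lw_def sw_def cw_def)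
  also have "\<dots> = G0 / 2" using rk[of k] r1 lpos by (simp add: G0_def field_simps)
  finally show ?thesis .
qed

lemma Gw_mono: "i \<le> j \<Longrightarrow> Gw i \<le> Gw j"
  using G0_pos r1 by (simp add: Gw_def power_increasing)

lemma xf_bounds: "0 \<le> xf S i j" "xf S i j \<le> 1"
  using X_le[of S i j] X_ge[of S i j] mpos by (auto simp: xf_def divide_le_eq)

lemma blk_psi: "blk r S (\<lambda>i. aw i - 1) cw j =
   ((1 - sg S) * xf S k j * Gw k - sg S * (1 - xf S k j) * Lw k)
   + (sg S * (1 - xf S 1 j) * Gw 0 - (1 - sg S) * xf S 1 j * Lw 0)
   + (\<Sum>i\<in>{1..<k}. Gw i * xf S i j * (1 - xf S (Suc i) j) - Lw i * xf S (Suc i) j * (1 - xf S i j))"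
proof -
  have mk: "real m ^ i \<noteq> 0" for i using mpos by simp
  have top: "1 / (real l * real m ^ k) * (r * sg S * (real m ^ k - X S k j) * (aw k - 1) + (1 - sg S) * X S k j * cw k)
     = (1 - sg S) * xf S k j * Gw k - sg S * (1 - xf S k j) * Lw k"
  proof -
    have Lk: "Lw k = r * sw k / real l" by (simp add: Lw_def)
    show ?thesis unfolding aw_sw xf_def Gw_eq(2) Lk by (rule algT) (use lpos mk[of k] in auto)
  qed
  have bot: "r * X S 1 j * (1 - sg S) * (aw 0 - 1) + (real m - X S 1 j) * sg S * cw 0
     = sg S * (1 - xf S 1 j) * Gw 0 - (1 - sg S) * xf S 1 j * Lw 0"
  proof -
    have L0: "Lw 0 = r * real m * sw 0" "Gw 0 = real m * cw 0" using kpos by (simp_all add: Lw_def Gw_eq(1))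
    show ?thesis unfolding aw_sw xf_def L0 power_one_right by (rule algB) (use mpos in auto)
  qed
  have ch: "(\<Sum>i\<in>{1..<k}. 1 / real m ^ i * (r * X S (Suc i) j * (real m ^ i - X S i j) * (aw i - 1)
        + (real m ^ Suc i - X S (Suc i) j) * X S i j * cw i))
     = (\<Sum>i\<in>{1..<k}. Gw i * xf S i j * (1 - xf S (Suc i) j) - Lw i * xf S (Suc i) j * (1 - xf S i j))"
  proof (intro sum.cong refl)
    fix i assume i: "i \<in> {1..<k}"
    then have ik: "i < k" "i \<noteq> k" by auto
    show "1 / real m ^ i * (r * X S (Suc i) j * (real m ^ i - X S i j) * (aw i - 1)
        + (real m ^ Suc i - X S (Suc i) j) * X S i j * cw i)
       = Gw i * xf S i j * (1 - xf S (Suc i) j) - Lw i * xf S (Suc i) j * (1 - xf S i j)"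
    proof -
      have GL: "Gw i = real m * real m ^ i * cw i" "Lw i = r * (real m * real m ^ i) * sw i"
        using ik by (simp_all add: Gw_eq(1) Lw_def)
      show ?thesis unfolding aw_sw xf_def GL power_Suc by (rule algC) (use mpos in auto)
    qed
  qed
  show ?thesis unfolding blk_def top bot ch ..
qed


lemma blk_psi_ge: "blk r S (\<lambda>i. aw i - 1) cw j \<ge> (if sg S = 1 \<and> 2 \<le> k \<and> xf S k j > 1 / (2 * r ^ k) then - Gw k else 0)"
proof -
  let ?x = "\<lambda>i. xf S i j"
  have ch: "(\<Sum>i\<in>{1..<k}. Gw i * ?x i * (1 - ?x (Suc i)) - Lw i * ?x (Suc i) * (1 - ?x i)) \<ge> Gw 1 * ?x 1 - Gw k * ?x k"
    using kpos by (intro chain_bound) (auto simp: xf_bounds Lw_le Gw_mono)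
  have x1: "0 \<le> ?x 1" "?x 1 \<le> 1" and xk: "0 \<le> ?x k" "?x k \<le> 1" by (simp_all add: xf_bounds)
  have G01: "Gw 0 \<le> Gw 1" "Gw 1 \<le> Gw k" "0 \<le> Gw 0" using kpos G0_pos by (auto intro!: Gw_mono simp del: power_one_right) (simp add: Gw_def)
  have L0: "Lw 0 \<le> Gw 1" using Lw_le[of 0] kpos by simp
  have Lk: "Lw k = Gw 0 / 2" using Lk_eq by (simp add: Gw_def)
  note b = blk_psi[of S j]
  consider (z) "sg S = 0" | (one) "sg S = 1" using sg01 by blast
  then show ?thesis
  proof cases
    case z
    have "(Gw 1 - Lw 0) * ?x 1 \<ge> 0" using L0 x1 by simp
    then show ?thesis using b ch z by (simp add: algebra_simps)
  next
    case one
    have base: "blk r S (\<lambda>i. aw i - 1) cw j \<ge> - (1 - ?x k) * Lw k + (1 - ?x 1) * Gw 0 + Gw 1 * ?x 1 - Gw k * ?x k"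
      using b ch one by (simp add: algebra_simps)
    show ?thesis
    proof (cases "k = 1")
      case True
      have "(1 - ?x 1) * (Gw 0 - Lw k) \<ge> 0" using x1 Lk G01 by simp
      then have "blk r S (\<lambda>i. aw i - 1) cw j \<ge> 0" using base True by (simp add: algebra_simps)
      then show ?thesis using True by simp
    next
      case False
      have a1: "(1 - ?x 1) * Gw 0 + Gw 1 * ?x 1 \<ge> Gw 0"
      proof -
        have "Gw 1 * ?x 1 \<ge> Gw 0 * ?x 1" using G01 x1 by (intro mult_right_mono) auto
        then show ?thesis by (simp add: algebra_simps)
      qed
      have a2: "(1 - ?x k) * Lw k \<le> Lw k" using xk Lk G01 by (simp add: mult_left_le_one_le)
      have main: "blk r S (\<lambda>i. aw i - 1) cw j \<ge> Gw 0 / 2 - Gw k * ?x k" using base a1 a2 Lk by linarith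
      show ?thesis
      proof (cases "?x k > 1 / (2 * r ^ k)")
        case True
        have "0 \<le> Gw k" using G01 by linarith
        then have "Gw k * ?x k \<le> Gw k" using xk by (simp add: mult_left_le)
        then show ?thesis using main True False kpos G01 one by auto
      next
        case nb: False
        have "Gw k * ?x k \<le> Gw k * (1 / (2 * r ^ k))" using nb G01 G0_pos by (intro mult_left_mono) (auto simp: Gw_def)
        also have "\<dots> = Gw 0 / 2" using r1 by (simp add: Gw_def)
        finally show ?thesis using main nb one by auto
      qed
    qed
  qed
qed


definition psi :: "(nat\<times>nat\<times>nat) set \<Rightarrow> real" where
  "psi S = (\<Prod>v\<in>S. aw (fst v))"

lemma aw_pos: "aw i > 0" and aw_le1: "aw i \<le> 1" and aw_lt1: "aw i < 1"
  using cw_pos[of i] by (auto simp: aw_def)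

lemma psi_nonneg: "psi S \<ge> 0" unfolding psi_def by (intro prod_nonneg) (simp add: aw_pos less_imp_le)

lemma psi_step:
  assumes "S \<subseteq> V" shows "psi (nxt S v w) - psi S = psi S * Q (\<lambda>i. aw i - 1) cw (v \<in> S) (w \<in> S) (fst w)"
proof -
  have fS: "finite S" using assms finV finite_subset by blast
  show ?thesis
  proof (cases "v \<in> S")
    case True
    then show ?thesis
      by (cases "w \<in> S") (simp_all add: nxt_def psi_def Q_def fS insert_absorb algebra_simps)
  next
    case False
    show ?thesis
    proof (cases "w \<in> S")
      case True
      have "psi S = aw (fst w) * psi (S - {w})" unfolding psi_def using fS True by (rule prod.remove)
      then have "psi (S - {w}) = psi S * (1 + cw (fst w))" using cw_pos[of "fst w"] by (simp add: aw_def field_simps)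
      then show ?thesis using False True by (simp add: nxt_def Q_def algebra_simps)
    next
      case False2: False
      then show ?thesis using False by (simp add: nxt_def Q_def)
    qed
  qed
qed

lemma Ex_psi: "S \<subseteq> V \<Longrightarrow> Ex V E r psi S - psi S = psi S / total_fitness V r S * (\<Sum>j\<in>{1..l}. blk r S (\<lambda>i. aw i - 1) cw j)"
  using r1 by (intro Ex_Q) (auto simp: psi_step)

lemma Ex_hh: "S \<subseteq> V \<Longrightarrow> Ex V E r hh S - hh S = (r - 1) / total_fitness V r S * (\<Sum>j\<in>{1..l}. OC S j)"
proof -
  assume S: "S \<subseteq> V"
  have "Ex V E r hh S - hh S = 1 / total_fitness V r S * (\<Sum>j\<in>{1..l}. blk r S pw (\<lambda>i. - pw i) j)"
    using r1 S by (intro Ex_Q) (auto simp: hh_step)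
  then show ?thesis by (simp add: blk_hh sum_distrib_left)
qed

definition psib :: real where "psib = aw k powr (real m ^ k / (2 * r ^ k))"
definition eta :: real where "eta = (if 2 \<le> k then cw k * psib else 0)"

lemma psib_nonneg: "psib \<ge> 0" by (simp add: psib_def)

lemma eta_nonneg: "eta \<ge> 0"
  using psib_nonneg cw_pos[of k] by (simp add: eta_def)

lemma card_top_block: "card (S \<inter> mf_block m i j) = Xn S i j"
proof -
  have "S \<inter> mf_block m i j = (\<lambda>x. (i,j,x)) ` {x. x < m ^ i \<and> (i,j,x) \<in> S}" by (auto simp: mf_block_def)
  then show ?thesis by (simp add: Xn_def card_image inj_on_def)
qed

lemma psi_le_block: "S \<subseteq> V \<Longrightarrow> psi S \<le> aw i ^ Xn S i j"
proof -
  assume "S \<subseteq> V"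
  then have fS: "finite S" using finV finite_subset by blast
  let ?T = "S \<inter> mf_block m i j"
  have "psi S = (\<Prod>v\<in>S - ?T. aw (fst v)) * (\<Prod>v\<in>?T. aw (fst v))"
    unfolding psi_def using fS by (intro prod.subset_diff) auto
  also have "(\<Prod>v\<in>?T. aw (fst v)) = (\<Prod>v\<in>?T. aw i)" by (intro prod.cong) (auto simp: mf_block_def)
  also have "\<dots> = aw i ^ Xn S i j" by (simp add: card_top_block)
  also have "(\<Prod>v\<in>S - ?T. aw (fst v)) \<le> 1" by (intro prod_le_1) (auto simp: aw_le1 aw_pos less_imp_le)
  finally show ?thesis using aw_pos[of i] by (simp add: mult_left_le_one_le)
qed

lemma psi_le_sub: "S \<subseteq> V \<Longrightarrow> T \<subseteq> S \<Longrightarrow> (\<And>v. v \<in> T \<Longrightarrow> fst v = i) \<Longrightarrow> psi S \<le> aw i ^ card T"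
proof -
  assume S: "S \<subseteq> V" and T: "T \<subseteq> S" and Ti: "\<And>v. v \<in> T \<Longrightarrow> fst v = i"
  then have fS: "finite S" using finV finite_subset by blast
  have "psi S = (\<Prod>v\<in>S - T. aw (fst v)) * (\<Prod>v\<in>T. aw (fst v))"
    unfolding psi_def using fS T by (intro prod.subset_diff) auto
  also have "(\<Prod>v\<in>T. aw (fst v)) = (\<Prod>v\<in>T. aw i)" by (intro prod.cong) (auto simp: Ti)
  also have "\<dots> = aw i ^ card T" by simp
  also have "(\<Prod>v\<in>S - T. aw (fst v)) \<le> 1" by (intro prod_le_1) (auto simp: aw_le1 aw_pos less_imp_le)
  finally show ?thesis using aw_pos[of i] by (simp add: mult_left_le_one_le)
qed

lemma psiF: assumes S: "S \<subseteq> V" shows "psi S * (\<Sum>j\<in>{1..l}. blk r S (\<lambda>i. aw i - 1) cw j) \<ge> - eta"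
proof (cases "\<exists>j\<in>{1..l}. sg S = 1 \<and> 2 \<le> k \<and> xf S k j > 1 / (2 * r ^ k)")
  case False
  then have "blk r S (\<lambda>i. aw i - 1) cw j \<ge> 0" if "j \<in> {1..l}" for j using blk_psi_ge[of S j] that by auto
  then have "(\<Sum>j\<in>{1..l}. blk r S (\<lambda>i. aw i - 1) cw j) \<ge> 0" by (intro sum_nonneg) auto
  moreover have "eta \<ge> 0" using eta_nonneg .
  ultimately show ?thesis using psi_nonneg[of S] by (smt (verit) mult_nonneg_nonneg)
next
  case True
  then obtain j0 where j0: "j0 \<in> {1..l}" "2 \<le> k" "xf S k j0 > 1 / (2 * r ^ k)" by blast
  have "(\<Sum>j\<in>{1..l}. blk r S (\<lambda>i. aw i - 1) cw j) \<ge> (\<Sum>j\<in>{1..l}. - Gw k)"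
  proof (rule sum_mono)
    fix j assume "j \<in> {1..l}"
    have "Gw k \<ge> 0" using G0_pos r1 by (simp add: Gw_def)
    then show "- Gw k \<le> blk r S (\<lambda>i. aw i - 1) cw j" using blk_psi_ge[of S j] by (auto split: if_splits)
  qed
  also have "(\<Sum>j\<in>{1..l}. - Gw k) = - cw k" using lpos by (simp add: Gw_eq(2))
  finally have F: "(\<Sum>j\<in>{1..l}. blk r S (\<lambda>i. aw i - 1) cw j) \<ge> - cw k" .
  have "real (Xn S k j0) > real m ^ k / (2 * r ^ k)"
    using j0(3) mpos by (simp add: xf_def X_Xn field_simps)
  then have "aw k ^ Xn S k j0 \<le> psib"
    unfolding psib_def using aw_pos[of k] aw_lt1[of k]
    by (subst powr_realpow[symmetric]) (auto intro: powr_mono')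
  then have ps: "psi S \<le> psib" using psi_le_block[OF S, of k j0] by linarith
  have "psi S * (\<Sum>j\<in>{1..l}. blk r S (\<lambda>i. aw i - 1) cw j) \<ge> psi S * (- cw k)"
    using F psi_nonneg[of S] by (intro mult_left_mono) auto
  moreover have "psi S * cw k \<le> psib * cw k" using ps cw_pos[of k] by (intro mult_right_mono) auto
  ultimately show ?thesis using j0 by (simp add: eta_def algebra_simps)
qed


lemma TF_le: "total_fitness V r S \<le> r * real (card V)"
proof -
  have "total_fitness V r S \<le> (\<Sum>v\<in>V. r)" unfolding total_fitness_def
    by (intro sum_mono) (use r1 in \<open>simp add: fitness_def\<close>)
  then show ?thesis by (simp add: mult.commute)
qed

lemma hh_nonneg: "hh S \<ge> 0" unfolding hh_def by (intro sum_nonneg) (simp add: pw_pos less_imp_le)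

lemma drift_hh_ge:
  assumes S: "S \<subseteq> V" "S \<noteq> {}" "S \<noteq> V"
  shows "Ex V E r hh S - hh S \<ge> (r - 1) / (total_fitness V r S * real m ^ (2*k))"
proof -
  interpret mc V E r using mc r1 by simp
  have "(r - 1) / total_fitness V r S * (1 / real m ^ (2*k)) \<le> (r - 1) / total_fitness V r S * (\<Sum>j\<in>{1..l}. OC S j)"
    using OC_pos[OF S] TF_pos[of S] r1 by (intro mult_left_mono) auto
  then show ?thesis using Ex_hh[OF S(1)] by simp
qed

lemma top_bound:
  assumes u: "u \<in> V" "fst u = k"
  shows "extinction_prob V E r {u} \<ge> aw k - psi V - (2 * eta * real m ^ (2*k) / (r - 1)) * hh V"
proof (rule limit_arg[OF _ hh_nonneg])
  interpret mc V E r using mc r1 by simp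
  fix e :: real assume e: "e > 0"
  define B where "B = 2 * eta * real m ^ (2*k) / (r - 1)"
  have B: "B \<ge> 0" using eta_nonneg r1 by (simp add: B_def)
  define \<gamma> where "\<gamma> = e * (r - 1) / (real m ^ (2*k) * (r * real (card V)))"
  have mk: "real m ^ (2*k) > 0" using mpos by simp
  have cV: "real (card V) > 0" using finV vs_V card_gt_0_iff by fastforce
  have g: "\<gamma> > 0" using e r1 mk cV by (simp add: \<gamma>_def)
  have "extinction_prob V E r {u} \<ge> psi {u} - psi V - (B + e) * (hh V - hh {u})"
  proof (rule combo_lower[OF _ _ _ _ _ g])
    show "psi {} = 1" by (simp add: psi_def)
    show "psi V \<ge> 0" by (rule psi_nonneg)
    show "hh {} = 0" by (simp add: hh_def)
    show "hh V \<ge> 0" by (rule hh_nonneg)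
    show "B + e \<ge> 0" using B e by simp
    show "{u} \<subseteq> V" "{u} \<noteq> {}" using u by auto
    fix S assume S: "S \<subseteq> V" "S \<noteq> {}" "S \<noteq> V"
    let ?TF = "total_fitness V r S"
    have TF: "?TF > 0" "?TF \<le> r * real (card V)" using TF_pos TF_le by auto
    have d1: "Ex V E r psi S - psi S \<ge> - eta / ?TF"
    proof -
      have "Ex V E r psi S - psi S = (psi S * (\<Sum>j\<in>{1..l}. blk r S (\<lambda>i. aw i - 1) cw j)) / ?TF"
        using Ex_psi[OF S(1)] by simp
      also have "\<dots> \<ge> - eta / ?TF" using psiF[OF S(1)] TF(1) by (intro divide_right_mono) auto
      finally show ?thesis .
    qed
    have d2: "(B + e) * (Ex V E r hh S - hh S) \<ge> (B + e) * ((r - 1) / (?TF * real m ^ (2*k)))"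
      using drift_hh_ge[OF S] B e by (intro mult_left_mono) auto
    have "(B + e) * ((r - 1) / (?TF * real m ^ (2*k))) = 2 * eta / ?TF + e * (r - 1) / (?TF * real m ^ (2*k))"
      using r1 mk TF(1) by (simp add: B_def field_simps)
    moreover have "e * (r - 1) / (?TF * real m ^ (2*k)) \<ge> \<gamma>"
      unfolding \<gamma>_def using TF e r1 mk cV
      by (intro divide_left_mono mult_pos_pos mult_left_mono) (auto simp: mult.commute)
    moreover have "eta / ?TF \<ge> 0" using eta_nonneg TF(1) by simp
    ultimately show "Ex V E r psi S + (B + e) * Ex V E r hh S \<ge> psi S + (B + e) * hh S + \<gamma>"
      using d1 d2 by (simp add: algebra_simps)
  qed
  moreover have "psi {u} = aw k" using u by (simp add: psi_def)
  moreover have "(B + e) * (hh V - hh {u}) \<le> (B + e) * hh V"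
    using B e hh_nonneg[of "{u}"] by (intro mult_left_mono) auto
  ultimately show "extinction_prob V E r {u} \<ge> aw k - psi V - (B + e) * hh V" by linarith
qed


lemma V_ne_single: "V \<noteq> {x}"
proof -
  have "(k,1,0) \<in> V" using kpos lpos mpos by (simp add: mem_V)
  moreover have "(k,1,0) \<noteq> vs" using kpos by (simp add: vs_def)
  ultimately show ?thesis using vs_V by auto
qed

lemma low_bound:
  assumes x: "x \<in> V" "x \<notin> out_nbrs E x" and D: "mc.Din V E x \<ge> 1"
  shows "extinction_prob V E r {x} \<ge> 1 / (1 + r)"
proof (rule limit_arg[where c=0, OF _ hh_nonneg, simplified])
  interpret mc V E r using mc r1 by simp
  fix e :: real assume e: "e > 0"
  define p where "p = 1 / (1 + r)"
  define \<psi> where "\<psi> S = (if S = {} then 1 else if S = {x} then p else 0)" for S :: "(nat\<times>nat\<times>nat) set"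
  define \<gamma> where "\<gamma> = e * (r - 1) / (real m ^ (2*k) * (r * real (card V)))"
  have mk: "real m ^ (2*k) > 0" using mpos by simp
  have cV: "real (card V) > 0" using finV vs_V card_gt_0_iff by fastforce
  have g: "\<gamma> > 0" using e r1 mk cV by (simp add: \<gamma>_def)
  have p: "0 \<le> p" "p * (Din x + r) \<le> Din x"
  proof -
    show "0 \<le> p" using r1 by (simp add: p_def)
    have "Din x + r \<le> Din x * (1 + r)" using D r1 by (simp add: algebra_simps)
    then show "p * (Din x + r) \<le> Din x" using r1 by (simp add: p_def field_simps)
  qed
  have "extinction_prob V E r {x} \<ge> \<psi> {x} - \<psi> V - e * (hh V - hh {x})"
  proof (rule combo_lower[OF _ _ _ _ _ g])
    show "\<psi> {} = 1" by (simp add: \<psi>_def)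
    show "\<psi> V \<ge> 0" using r1 by (simp add: \<psi>_def p_def)
    show "hh {} = 0" by (simp add: hh_def)
    show "hh V \<ge> 0" by (rule hh_nonneg)
    show "e \<ge> 0" using e by simp
    show "{x} \<subseteq> V" "{x} \<noteq> {}" using x by auto
    fix S assume S: "S \<subseteq> V" "S \<noteq> {}" "S \<noteq> V"
    let ?TF = "total_fitness V r S"
    have TF: "?TF > 0" "?TF \<le> r * real (card V)" using TF_pos TF_le by auto
    have d1: "Ex V E r \<psi> S \<ge> \<psi> S"
    proof (cases "S = {x}")
      case True
      have "Ex V E r \<psi> {x} \<ge> p" unfolding \<psi>_def by (rule single_drift[OF x p])
      then show ?thesis using True by (simp add: \<psi>_def)
    next
      case False
      have "Ex V E r \<psi> S \<ge> 0" by (rule nonneg_drift[OF S(1)]) (use r1 in \<open>simp add: \<psi>_def p_def\<close>)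
      then show ?thesis using False S(2) by (simp add: \<psi>_def)
    qed
    have d2: "e * (Ex V E r hh S - hh S) \<ge> e * ((r - 1) / (?TF * real m ^ (2*k)))"
      using drift_hh_ge[OF S] e by (intro mult_left_mono) auto
    moreover have "e * ((r - 1) / (?TF * real m ^ (2*k))) \<ge> \<gamma>"
      unfolding \<gamma>_def using TF e r1 mk cV
      by (simp only: times_divide_eq_right) (intro divide_left_mono mult_pos_pos mult_left_mono, auto simp: mult.commute)
    ultimately show "Ex V E r \<psi> S + e * Ex V E r hh S \<ge> \<psi> S + e * hh S + \<gamma>"
      using d1 by (simp add: algebra_simps)
  qed
  moreover have "\<psi> {x} = p" "\<psi> V = 0" using V_ne_single[of x] vs_V by (auto simp: \<psi>_def)
  moreover have "e * (hh V - hh {x}) \<le> e * hh V"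
    using e hh_nonneg[of "{x}"] by (intro mult_left_mono) auto
  ultimately show "extinction_prob V E r {x} \<ge> 1 / (1 + r) - e * hh V" by (simp add: p_def)
qed

end


lemma mean_eq: "mean_extinction r (metafunnel k l m) = (\<Sum>v\<in>V. extinction_prob V E r {v}) / real (card V)"
  by (simp add: mean_extinction_def V_def E_def)

lemma cardV_pos: "card V > 0" using finV vs_V card_gt_0_iff by fastforce


lemma mean_low:
  assumes k2: "2 \<le> k"
  shows "mean_extinction 2 (metafunnel k l m) \<ge> 1 / (3 * (real m + 1))"
proof -
  interpret mc V E 2 using mc by simp
  let ?T = "mf_layer l m k"
  let ?L = "V - ?T"
  have fL: "finite ?L" using finV by simp
  have lowb: "extinction_prob V E 2 {v} \<ge> 1 / 3" if v: "v \<in> ?L" for v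
  proof -
    have vV: "v \<in> V" using v by simp
    have "fst v < k"
    proof -
      obtain a b c where abc: "v = (a,b,c)" by (cases v) auto
      have vT: "v \<notin> ?T" using v by simp
      show ?thesis
      proof (cases "a = 0")
        case True then show ?thesis using abc kpos by simp
      next
        case False
        then have a: "1 \<le> a" "a \<le> k" "1 \<le> b" "b \<le> l" "c < m ^ a" using vV abc by (auto simp: mem_V)
        have "a \<noteq> k"
        proof
          assume "a = k"
          then have "v \<in> ?T" using a abc by simp
          then show False using vT by simp
        qed
        then show ?thesis using a abc by simp
      qed
    qed
    then show ?thesis using low_bound[of 2 v] noloop[OF vV] Din_low[OF vV] vV by simp
  qed
  have "(\<Sum>v\<in>V. extinction_prob V E 2 {v}) \<ge> (\<Sum>v\<in>?L. extinction_prob V E 2 {v})"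
    by (rule sum_mono2[OF finV]) (auto intro: ext_prob_nonneg)
  moreover have "(\<Sum>v\<in>?L. extinction_prob V E 2 {v}) \<ge> (\<Sum>v\<in>?L. 1/3)"
    by (rule sum_mono) (use lowb in auto)
  ultimately have S: "(\<Sum>v\<in>V. extinction_prob V E 2 {v}) \<ge> real (card ?L) / 3" by simp
  have cT: "card ?T = l * m ^ k" by (rule card_layer)
  have cV: "card V = card ?L + l * m ^ k"
  proof -
    have "card ?L = card V - card ?T" by (rule card_Diff_subset[OF finite_layer top_sub])
    moreover have "card ?T \<le> card V" by (rule card_mono[OF finV top_sub])
    ultimately show ?thesis using cT by linarith
  qed
  have sub: "mf_layer l m (k - 1) \<subseteq> ?L" using k2 by (auto simp: mf_layer_def mf_block_def mem_V)
  have "l * m ^ (k - 1) \<le> card ?L" using card_mono[OF fL sub] card_layer by simp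
  then have "l * m ^ k \<le> m * card ?L" using k2
  proof -
    have "m ^ k = m * m ^ (k - 1)" using k2 by (cases k) auto
    then have "l * m ^ k = m * (l * m ^ (k - 1))" by simp
    also have "\<dots> \<le> m * card ?L" using \<open>l * m ^ (k - 1) \<le> card ?L\<close> by simp
    finally show ?thesis .
  qed
  then have "card V \<le> (m + 1) * card ?L" using cV by simp
  then have "real (card V) \<le> real ((m + 1) * card ?L)" by (simp only: of_nat_le_iff)
  then have cVr: "real (card V) \<le> (real m + 1) * real (card ?L)" by (simp add: distrib_right)
  have cLpos: "real (card ?L) > 0"
  proof -
    have "vs \<in> ?L" using vs_V by (auto simp: vs_def)
    then have "card ?L > 0" using fL card_gt_0_iff by blast
    then show ?thesis by simp
  qed
  have "1 / (3 * (real m + 1)) = (real (card ?L) / 3) / ((real m + 1) * real (card ?L))"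
  proof -
    have "real m * (3 * real (card ?L)) \<ge> 0" by simp
    then have "3 * real (card ?L) + real m * (3 * real (card ?L)) \<noteq> 0" using cLpos by linarith
    then show ?thesis using cLpos by (simp add: field_simps)
  qed
  also have "\<dots> \<le> (real (card ?L) / 3) / real (card V)"
    using cVr cardV_pos cLpos by (intro divide_left_mono) auto
  also have "\<dots> \<le> (\<Sum>v\<in>V. extinction_prob V E 2 {v}) / real (card V)"
    using S cardV_pos by (intro divide_right_mono) auto
  finally show ?thesis by (simp add: mean_eq)
qed


lemma mean_top:
  assumes T: "\<And>u. u \<in> V \<Longrightarrow> fst u = k \<Longrightarrow> extinction_prob V E 2 {u} \<ge> T"
  shows "mean_extinction 2 (metafunnel k l m) \<ge> real l * real m ^ k * T / real (card V)"
proof -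
  interpret mc V E 2 using mc by simp
  let ?T = "mf_layer l m k"
  have "(\<Sum>v\<in>V. extinction_prob V E 2 {v}) \<ge> (\<Sum>v\<in>?T. extinction_prob V E 2 {v})"
    by (rule sum_mono2[OF finV top_sub]) (auto intro: ext_prob_nonneg)
  moreover have "(\<Sum>v\<in>?T. extinction_prob V E 2 {v}) \<ge> (\<Sum>v\<in>?T. T)"
  proof (rule sum_mono)
    fix v assume v: "v \<in> ?T"
    then have "fst v = k" by (cases v) simp
    then show "T \<le> extinction_prob V E 2 {v}" by (rule T[rotated]) (use v top_sub in blast)
  qed
  moreover have "(\<Sum>v\<in>?T. T) = real l * real m ^ k * T" by (simp add: card_layer)
  ultimately show ?thesis unfolding mean_eq using cardV_pos by (intro divide_right_mono) auto
qed


lemma cw2: "cw 2 k = 2 ^ (k+2) - 1" by (simp add: cw_def)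
lemma aw2: "aw 2 k = 1 / 2 ^ (k+2)" by (simp add: aw_def cw_def)

lemma psiV_le: "psi 2 V \<le> (1 / 2 ^ (k+2)) ^ (l * m ^ k)"
  using psi_le_sub[of 2 V "mf_layer l m k" k] top_sub card_layer aw2
  by (auto simp: mf_layer_def)

lemma eta2_le: "eta 2 \<le> 2 ^ (k+2) * (1 / 2 ^ (k+2)) powr (real m ^ k / (2 * 2 ^ k))"
  by (simp add: eta_def psib_def cw2 aw2)

lemma pw_le: "pw i \<le> real l * real m"
proof -
  have "(1::real) \<le> real l" "1 \<le> real m" using lpos mpos by simp_all
  then have "1 \<le> real l * real m" using mult_mono[of 1 "real l" 1 "real m"] by simp
  moreover have "1 / real m ^ i \<le> 1" using mpos by (simp add: divide_le_eq one_le_power)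
  ultimately show ?thesis by (auto simp: pw_def)
qed

lemma hhV_le: "hh V \<le> real (card V) * (real l * real m)"
proof -
  have "hh V \<le> (\<Sum>v\<in>V. real l * real m)" unfolding hh_def by (intro sum_mono pw_le)
  then show ?thesis by simp
qed

lemma n_ge: "l * m ^ k + 1 \<le> card V" "l * m \<le> card V" "m ^ k \<le> card V" "l * k + 1 \<le> card V"
proof -
  have s1: "m ^ k \<le> (\<Sum>i\<in>{1..k}. m ^ i)" using kpos by (intro member_le_sum) auto
  have "m ^ 1 \<le> (\<Sum>i\<in>{1..k}. m ^ i)" using kpos by (intro member_le_sum) auto
  then have s2: "m \<le> (\<Sum>i\<in>{1..k}. m ^ i)" by simp
  have s3: "k \<le> (\<Sum>i\<in>{1..k}. m ^ i)"
  proof -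
    have "(\<Sum>i\<in>{1..k}. 1) \<le> (\<Sum>i\<in>{1..k}. m ^ i)" using mpos by (intro sum_mono) simp
    then show ?thesis by simp
  qed
  show "l * m ^ k + 1 \<le> card V" using s1 card_V by simp
  have "l * m \<le> l * (\<Sum>i\<in>{1..k}. m ^ i)" by (rule mult_le_mono2[OF s2])
  then show "l * m \<le> card V" unfolding card_V by linarith
  have "m ^ k \<le> l * m ^ k" using lpos by simp
  then show "m ^ k \<le> card V" using s1 card_V \<open>l * m ^ k + 1 \<le> card V\<close> by linarith
  show "l * k + 1 \<le> card V" using s3 card_V by simp
qed

lemma n_le3: "2 \<le> m \<Longrightarrow> card V \<le> 3 * (l * m ^ k)"
proof -
  assume m2: "2 \<le> m"
  have g: "(\<Sum>i\<in>{1..j}. m ^ i) \<le> 2 * m ^ j" for j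
  proof (induction j)
    case 0 then show ?case by simp
  next
    case (Suc j)
    have "(\<Sum>i\<in>{1..Suc j}. m ^ i) = (\<Sum>i\<in>{1..j}. m ^ i) + m ^ Suc j" by simp
    also have "\<dots> \<le> 2 * m ^ j + m ^ Suc j" using Suc by simp
    also have "2 * m ^ j \<le> m ^ Suc j" using m2 by simp
    finally show ?case by simp
  qed
  have "card V \<le> 1 + l * (2 * m ^ k)" using card_V g[of k] by simp
  moreover have "1 \<le> l * m ^ k" using lpos mpos by (simp add: Suc_le_eq)
  ultimately show ?thesis by linarith
qed


definition T2 :: real where
  "T2 = aw 2 k - psi 2 V - (2 * eta 2 * real m ^ (2*k) / (2 - 1)) * hh V"

lemma T2_bound: "u \<in> V \<Longrightarrow> fst u = k \<Longrightarrow> extinction_prob V E 2 {u} \<ge> T2"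
  unfolding T2_def by (rule top_bound) auto

lemma mean_k1:
  assumes k1: "k = 1" and n3: "card V \<ge> 3"
  shows "mean_extinction 2 (metafunnel k l m) \<ge> 7 / 128"
proof -
  have cV: "card V = 1 + l * m" using card_V k1 by simp
  then have lm2: "l * m \<ge> 2" using n3 by simp
  have "eta 2 = (if 2 \<le> k then cw 2 k * psib 2 else 0)" by (simp add: eta_def)
  then have e0: "eta 2 = 0" using k1 by simp
  have "psi 2 V \<le> (1/8) ^ (l * m)" using psiV_le k1 by simp
  also have "\<dots> \<le> (1/8) ^ 2" using lm2 by (intro power_decreasing) auto
  finally have pV: "psi 2 V \<le> (1/8) ^ 2" .
  have "(1/8::real) ^ 2 = 1/64" by (simp add: power2_eq_square)
  moreover have "aw 2 k = 1/8" using aw2 k1 by simp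
  moreover have "T2 = aw 2 k - psi 2 V" by (simp add: T2_def e0)
  ultimately have "T2 \<ge> 7/64" using pV by linarith
  have A: "mean_extinction 2 (metafunnel k l m) \<ge> real l * real m ^ k * T2 / real (card V)"
    by (rule mean_top[OF T2_bound])
  have B: "real l * real m ^ k * T2 / real (card V) = real (l * m) * T2 / (1 + real (l * m))"
    using cV k1 by simp
  have C: "real (l * m) * T2 / (1 + real (l * m)) \<ge> 7 / 128"
  proof -
    have x: "real (l * m) \<ge> 2" using lm2 by linarith
    have "real (l * m) * (7/64) \<le> real (l * m) * T2" using \<open>T2 \<ge> 7/64\<close> x by (intro mult_left_mono) auto
    moreover have "7 / 128 * (1 + real (l * m)) \<le> real (l * m) * (7/64)" using x by simp
    ultimately have "7 / 128 * (1 + real (l * m)) \<le> real (l * m) * T2" by linarith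
    then show ?thesis using x by (simp add: le_divide_eq)
  qed
  show ?thesis using A B C by linarith
qed

lemma mean_C:
  assumes k2: "2 \<le> k" and m2: "2 \<le> m"
    and H: "real m / 4 * (real k + 2) * ln 2 \<ge> 4 * ln (real (card V)) + (2 * real k + 7) * ln 2"
  shows "mean_extinction 2 (metafunnel k l m) \<ge> 1 / (6 * 2 ^ (k+2))"
proof -
  define a :: real where "a = 1 / 2 ^ (k+2)"
  define n where "n = real (card V)"
  have a: "0 < a" "a \<le> 1/16"
  proof -
    show "0 < a" by (simp add: a_def)
    have "(16::real) \<le> 2 ^ (k+2)" using k2 power_increasing[of 4 "k+2" "2::real"] by simp
    then show "a \<le> 1/16" by (simp add: a_def field_simps)
  qed
  have n1: "n \<ge> 1" using cardV_pos by (simp add: n_def)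
  have lmk: "l * m ^ k \<ge> 2"
  proof -
    have "m ^ 1 \<le> m ^ k" using k2 m2 by (intro power_increasing) auto
    then have "m \<le> m ^ k" by simp
    moreover have "m ^ k \<le> l * m ^ k" using lpos by simp
    ultimately show ?thesis using m2 by linarith
  qed
  have "psi 2 V \<le> a ^ (l * m ^ k)" using psiV_le by (simp add: a_def)
  also have "\<dots> \<le> a ^ 2" using lmk a by (intro power_decreasing) auto
  also have "\<dots> \<le> a / 4"
  proof -
    have "a * a \<le> a * (1/16)" using a by (intro mult_left_mono) auto
    moreover have "0 \<le> a * a" by simp
    ultimately show ?thesis unfolding power2_eq_square by linarith
  qed
  finally have psiV: "psi 2 V \<le> a / 4" .
  have ex: "real m / 4 \<le> real m ^ k / (2 * 2 ^ k)"
  proof -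
    have "(real m / 2) ^ 1 \<le> (real m / 2) ^ k" using m2 k2 by (intro power_increasing) auto
    then show ?thesis by (simp add: power_divide field_simps)
  qed
  have "a powr (real m ^ k / (2 * 2 ^ k)) \<le> a powr (real m / 4)"
    using a ex by (intro powr_mono') auto
  also have "a powr (real m / 4) = exp (- (real m / 4 * (real k + 2) * ln 2))"
  proof -
    have l2: "ln ((2::real)^(k+2)) = real (k+2) * ln 2" by (rule ln_realpow)
    have "ln a = ln 1 - ln ((2::real)^(k+2))" unfolding a_def by (rule ln_divide_pos) auto
    then have la: "ln a = - ((real k + 2) * ln 2)" using l2 by simp
    show ?thesis using a by (simp add: powr_def la)
  qed
  also have "\<dots> \<le> exp (- (4 * ln n + (2 * real k + 7) * ln 2))" using H by (simp add: n_def)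
  also have "\<dots> = 1 / (n ^ 4 * 2 ^ (2 * k + 7))"
  proof -
    have e1: "exp (real 4 * ln n) = n ^ 4" using exp_of_nat_mult[of 4 "ln n"] n1 by simp
    have e2: "exp (real (2*k+7) * ln 2) = (2::real) ^ (2*k+7)" using exp_of_nat_mult[of "2*k+7" "ln (2::real)"] by simp
    have "exp (- (4 * ln n + (2 * real k + 7) * ln 2)) = 1 / (exp (real 4 * ln n) * exp (real (2*k+7) * ln 2))"
      by (simp add: exp_diff exp_minus inverse_eq_divide)
    then show ?thesis unfolding e1 e2 .
  qed
  finally have P: "a powr (real m ^ k / (2 * 2 ^ k)) \<le> 1 / (n ^ 4 * 2 ^ (2 * k + 7))" .
  define e' where "e' = 2 ^ (k+2) / (n ^ 4 * 2 ^ (2 * k + 7))"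
  have e'0: "e' \<ge> 0" by (simp add: e'_def)
  have eta: "eta 2 \<le> e'"
  proof -
    have "2 ^ (k+2) * (1 / 2 ^ (k+2)) powr (real m ^ k / (2 * 2 ^ k)) \<le> (2::real) ^ (k+2) * (1 / (n ^ 4 * 2 ^ (2 * k + 7)))"
      using P by (intro mult_left_mono) (auto simp: a_def)
    then show ?thesis using eta2_le by (simp add: e'_def)
  qed
  have mk: "real m ^ (2*k) \<le> n ^ 2"
  proof -
    have "real (m ^ k) \<le> n" using n_ge(3) by (simp add: n_def)
    then have "(real m ^ k) ^ 2 \<le> n ^ 2" by (intro power_mono) auto
    then show ?thesis by (simp add: power_mult mult.commute)
  qed
  have hh: "hh V \<le> n * n"
  proof -
    have lm: "real l * real m \<le> n" using n_ge(2) by (simp add: n_def flip: of_nat_mult)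
    have "hh V \<le> n * (real l * real m)" using hhV_le by (simp add: n_def)
    also have "\<dots> \<le> n * n" using lm n1 by (intro mult_left_mono) auto
    finally show ?thesis .
  qed
  have s1: "2 * eta 2 * real m ^ (2*k) \<le> 2 * e' * n ^ 2"
    using eta mk eta_nonneg e'0 by (intro mult_mono) auto
  have s2: "(2 * eta 2 * real m ^ (2*k) / (2 - 1)) * hh V \<le> (2 * e' * n ^ 2) * (n * n)"
  proof -
    have "(2 * eta 2 * real m ^ (2*k)) * hh V \<le> (2 * e' * n ^ 2) * (n * n)"
      by (rule mult_mono[OF s1 hh]) (use e'0 hh_nonneg[of 2 V] in auto)
    then show ?thesis by simp
  qed
  have p27: "(2::real) ^ (2*k+7) = 2 ^ 3 * 2 ^ (k+2) * 2 ^ (k+2)"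
  proof -
    have "2*k+7 = 3 + (k+2) + (k+2)" by simp
    then show ?thesis by (simp only: power_add)
  qed
  have "(2 * e' * n ^ 2) * (n * n) = 2 * 2 ^ (k+2) / 2 ^ (2 * k + 7)"
    using n1 by (simp add: e'_def field_simps power2_eq_square power4_eq_xxxx)
  also have "\<dots> = a / 4" unfolding p27 by (simp add: a_def)
  finally have Bh: "(2 * eta 2 * real m ^ (2*k) / (2 - 1)) * hh V \<le> a / 4" using s2 by simp
  have T: "T2 \<ge> a / 2" unfolding T2_def using psiV Bh aw2 by (simp add: a_def)
  have A: "mean_extinction 2 (metafunnel k l m) \<ge> real l * real m ^ k * T2 / real (card V)"
    by (rule mean_top[OF T2_bound])
  have C: "real l * real m ^ k * T2 / real (card V) \<ge> (a / 2) / 3"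
  proof -
    have c3: "real (card V) \<le> 3 * (real l * real m ^ k)" using n_le3[OF m2] by (simp flip: of_nat_mult of_nat_power)
    have lpos': "real l * real m ^ k > 0" using lpos mpos by simp
    have "(a / 2) / 3 * real (card V) \<le> (a/2) * (real l * real m ^ k)" using c3 a by simp
    also have "\<dots> \<le> T2 * (real l * real m ^ k)" using T lpos' by (intro mult_right_mono) auto
    finally show ?thesis using cardV_pos by (simp add: le_divide_eq mult.commute mult.left_commute)
  qed
  have "(a / 2) / 3 = 1 / (6 * 2 ^ (k+2))" by (simp add: a_def)
  then show ?thesis using A C by linarith
qed

end

lemma thresholds:
  fixes \<delta> :: real assumes d: "1/2 < \<delta>"
  shows "\<exists>L0. \<forall>L\<ge>L0. L \<ge> 400 \<and> L powr (2*\<delta> - 1) \<ge> 4 \<and> exp (sqrt L / 2) \<ge> 28 + 100 * L"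
proof -
  have "eventually (\<lambda>L::real. exp (sqrt L / 2) \<ge> 28 + 100 * L) at_top" by real_asymp
  then obtain L1 where L1: "\<And>L. L \<ge> L1 \<Longrightarrow> exp (sqrt L / 2) \<ge> 28 + 100 * L"
    by (auto simp: eventually_at_top_linorder)
  define c where "c = 2*\<delta> - 1"
  have c: "c > 0" using d by (simp add: c_def)
  define L2 where "L2 = 4 powr (1 / c)"
  have L2: "L powr c \<ge> 4" if "L \<ge> L2" for L
  proof -
    have "L2 powr c \<le> L powr c" using that by (intro powr_mono2) (auto simp: L2_def c less_imp_le)
    moreover have "L2 powr c = 4" using c by (simp add: L2_def powr_powr)
    ultimately show ?thesis by simp
  qed
  show ?thesis
    by (rule exI[of _ "max 400 (max L1 L2)"]) (auto simp: L1 L2 simp flip: c_def)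
qed

lemma ln2_ge: "ln (2::real) \<ge> 1/2"
proof -
  have "exp (1::real) \<le> 4" using exp_le by simp
  then have "1 \<le> ln (4::real)" by (subst ln_ge_iff) auto
  moreover have "ln (4::real) = 2 * ln 2"
  proof -
    have "ln ((2::real) ^ 2) = real 2 * ln 2" by (rule ln_realpow)
    then show ?thesis by simp
  qed
  ultimately show ?thesis by simp
qed

lemma zeta_le:
  fixes \<epsilon> \<delta> L :: real and n :: nat
  assumes L: "L = ln (real n)" "L \<ge> 1" and d: "\<delta> = 1 - max \<epsilon> (1/4)"
  shows "real n powr (- (1 / (L powr \<epsilon>))) \<le> exp (- (L powr \<delta>))"
proof -
  have n0: "real n > 0"
  proof (rule ccontr)
    assume "\<not> real n > 0" then have "n = 0" by simp
    then show False using L by simp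
  qed
  have "real n powr (- (1 / (L powr \<epsilon>))) = exp (- (L / L powr \<epsilon>))"
    using n0 L by (simp add: powr_def)
  also have "L / L powr \<epsilon> = L powr (1 - \<epsilon>)" using L by (simp add: powr_diff)
  also have "L powr (1 - \<epsilon>) \<ge> L powr \<delta>" using L d by (intro powr_mono) auto
  then have "exp (- (L powr (1 - \<epsilon>))) \<le> exp (- (L powr \<delta>))" by simp
  finally show ?thesis .
qed


lemma mf_card_gt:
  assumes "0 < k" "0 < l" "0 < m"
  shows "k < card (fst (metafunnel k l m))" "l < card (fst (metafunnel k l m))" "m < card (fst (metafunnel k l m))"
proof -
  interpret mf k l m using assms by unfold_locales
  have c: "card (fst (metafunnel k l m)) = card V" by (simp add: V_def)
  have a: "l * k + 1 \<le> card V" "l * m ^ k + 1 \<le> card V" using n_ge by auto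
  have "k \<le> l * k" "l \<le> l * k" using assms by simp_all
  then show "k < card (fst (metafunnel k l m))" "l < card (fst (metafunnel k l m))" using a c by linarith+
  have "m ^ 1 \<le> m ^ k" using assms by (intro power_increasing) auto
  moreover have "m ^ k \<le> l * m ^ k" using assms by simp
  ultimately show "m < card (fst (metafunnel k l m))" using a c by (simp only: power_one_right)
qed

lemma finite_small:
  "finite {G. is_metafunnel G \<and> card (fst G) < M}"
proof -
  have "{G. is_metafunnel G \<and> card (fst G) < M} \<subseteq> (\<lambda>(k,l,m). metafunnel k l m) ` ({..<M} \<times> {..<M} \<times> {..<M})"
  proof
    fix G assume "G \<in> {G. is_metafunnel G \<and> card (fst G) < M}"
    then obtain k l m where G: "G = metafunnel k l m" "0 < k" "0 < l" "0 < m" and c: "card (fst G) < M"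
      by (auto simp: is_metafunnel_def)
    have "k < M" "l < M" "m < M" using mf_card_gt[OF G(2-4)] c G(1) by auto
    then show "G \<in> (\<lambda>(k,l,m). metafunnel k l m) ` ({..<M} \<times> {..<M} \<times> {..<M})"
      using G(1) by force
  qed
  then show ?thesis by (rule finite_subset) simp
qed


lemma exp_facts: "exp (1::real) \<ge> 2" "exp (3::real) \<ge> 6"
proof -
  show e1: "exp (1::real) \<ge> 2" using exp_ge_add_one_self[of 1] by simp
  have "exp (3::real) = exp 1 ^ 3" using exp_of_nat_mult[of 3 "1::real"] by simp
  also have "\<dots> \<ge> 2 ^ 3" using e1 by (intro power_mono) auto
  finally show "exp (3::real) \<ge> 6" by simp
qed

lemma key:
  fixes \<epsilon> :: real assumes eps: "\<epsilon> < 1/2"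
  shows "\<exists>N. \<forall>k l m. 0 < k \<longrightarrow> 0 < l \<longrightarrow> 0 < m \<longrightarrow> N \<le> card (fst (metafunnel k l m)) \<longrightarrow>
     mean_extinction 2 (metafunnel k l m) > real (card (fst (metafunnel k l m))) powr
        (- (1 / (ln (real (card (fst (metafunnel k l m)))) powr \<epsilon>)))"
proof -
  define \<delta> where "\<delta> = 1 - max \<epsilon> (1/4)"
  have d: "1/2 < \<delta>" using eps by (auto simp: \<delta>_def)
  obtain L0 where L0: "\<And>L. L \<ge> L0 \<Longrightarrow> L \<ge> 400 \<and> L powr (2*\<delta> - 1) \<ge> 4 \<and> exp (sqrt L / 2) \<ge> 28 + 100 * L"
    using thresholds[OF d] by blast
  define N where "N = nat \<lceil>exp L0\<rceil>"
  show ?thesis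
  proof (intro exI allI impI)
    fix k l m assume k: "0 < k" and l: "0 < l" and m: "0 < m" and nN: "N \<le> card (fst (metafunnel k l m))"
    interpret mf k l m using k l m by unfold_locales
    define n where "n = card V"
    have nV: "card (fst (metafunnel k l m)) = n" by (simp add: n_def V_def)
    define L where "L = ln (real n)"
    have npos: "real n > 0" using cardV_pos by (simp add: n_def)
    have "real n \<ge> exp L0"
    proof -
      have "exp L0 \<le> real (nat \<lceil>exp L0\<rceil>)" by linarith
      also have "\<dots> \<le> real n"
      proof -
        have "nat \<lceil>exp L0\<rceil> \<le> n" using nN nV by (simp add: N_def)
        then show ?thesis by (simp only: of_nat_le_iff)
      qed
      finally show ?thesis .
    qed
    then have LL0: "L \<ge> L0" unfolding L_def using npos by (subst ln_ge_iff) auto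
    from L0[OF LL0] have L400: "L \<ge> 400" and Lc: "L powr (2*\<delta> - 1) \<ge> 4"
      and Le: "exp (sqrt L / 2) \<ge> 28 + 100 * L" by auto
    define x where "x = L powr \<delta>"
    have xs: "x \<ge> sqrt L"
    proof -
      have "L powr (1/2) \<le> L powr \<delta>" using L400 d by (intro powr_mono) auto
      then show ?thesis using L400 by (simp add: x_def powr_half_sqrt)
    qed
    have "sqrt L \<ge> 20" using L400 real_sqrt_le_mono[of 400 L] by simp
    then have x20: "x \<ge> 20" using xs by linarith
    have x2: "x * x \<ge> 4 * L"
    proof -
      have "x * x = L powr (2*\<delta>)" using L400 by (simp add: x_def flip: powr_add)
      also have "\<dots> = L powr (1 + (2*\<delta> - 1))" by simp
      also have "\<dots> = L powr 1 * L powr (2*\<delta> - 1)" by (rule powr_add)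
      also have "\<dots> \<ge> L * 4" using Lc L400 by simp
      finally show ?thesis by simp
    qed
    have zeta: "real n powr (- (1 / (L powr \<epsilon>))) \<le> exp (- x)"
      unfolding x_def using L400 by (intro zeta_le[OF L_def]) (auto simp: \<delta>_def)
    have ex1: "exp x \<ge> 1 + x" by (rule exp_ge_add_one_self)
    have emx: "exp (- x) = 1 / exp x" by (simp add: exp_minus inverse_eq_divide)
    have main: "mean_extinction 2 (metafunnel k l m) > exp (- x)"
    proof -
      consider (k1) "k = 1" | (A) "2 \<le> k" "real m < exp (x / 2)" | (C) "2 \<le> k" "real m \<ge> exp (x / 2)"
        using k by linarith
      then show ?thesis
      proof cases
        case k1
        have n3: "card V \<ge> 3"
        proof (rule ccontr)
          assume "\<not> 3 \<le> card V"
          then have "real n \<le> 2" by (simp add: n_def)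
          then have "L \<le> ln 2" unfolding L_def using npos by simp
          moreover have "ln (2::real) \<le> 1" using ln_le_minus_one[of 2] by simp
          ultimately show False using L400 by simp
        qed
        have "mean_extinction 2 (metafunnel k l m) \<ge> 7 / 128" by (rule mean_k1[OF k1 n3])
        moreover have "exp (- x) < 7 / 128"
        proof -
          have "exp x \<ge> 21" using ex1 x20 by linarith
          then show ?thesis unfolding emx by (simp add: divide_less_eq)
        qed
        ultimately show ?thesis by linarith
      next
        case A
        define t where "t = exp (x / 2)"
        have t4: "t \<ge> 4" using exp_ge_add_one_self[of "x/2"] x20 unfolding t_def by linarith
        have tt: "t * t = exp x" by (simp add: t_def flip: exp_add)
        have "3 * (real m + 1) < t * t"
        proof -
          have "3 * (real m + 1) < 3 * (t + 1)" using A(2) by (simp add: t_def)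
          also have "\<dots> \<le> t * t"
          proof -
            have "4 * t \<le> t * t" using t4 by (intro mult_right_mono) auto
            moreover have "3 * (t + 1) = 3 * t + 3" by simp
            ultimately show ?thesis using t4 by linarith
          qed
          finally show ?thesis .
        qed
        then have "1 / (3 * (real m + 1)) > 1 / exp x" unfolding tt by (intro divide_strict_left_mono) auto
        then show ?thesis using mean_low[OF A(1)] emx by linarith
      next
        case C
        have mL: "real m \<ge> 28 + 100 * L"
        proof -
          have "exp (sqrt L / 2) \<le> exp (x / 2)" using xs by simp
          then show ?thesis using Le C(2) by linarith
        qed
        have m2: "2 \<le> m" using mL L400 by linarith
        have l2: "ln (2::real) \<ge> 1/2" by (rule ln2_ge)
        have H: "real m / 4 * (real k + 2) * ln 2 \<ge> 4 * ln (real (card V)) + (2 * real k + 7) * ln 2"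
        proof -
          have "real m / 4 \<ge> 7 + 25 * L" using mL by simp
          then have "real m / 4 * (real k + 2) \<ge> (7 + 25 * L) * (real k + 2)" by (intro mult_right_mono) auto
          moreover have "(7 + 25 * L) * (real k + 2) \<ge> (2 * real k + 7) + 100 * L"
          proof -
            have "25 * L * (real k + 2) \<ge> 25 * L * 4" using C(1) L400 by (intro mult_left_mono) auto
            then show ?thesis by (simp add: algebra_simps)
          qed
          ultimately have "real m / 4 * (real k + 2) \<ge> (2 * real k + 7) + 100 * L" by linarith
          then have "real m / 4 * (real k + 2) * ln 2 \<ge> ((2 * real k + 7) + 100 * L) * ln 2"
            using l2 by (intro mult_right_mono) auto
          moreover have "100 * L * ln 2 \<ge> 4 * L"
          proof -
            have "100 * L * (1/2) \<le> 100 * L * ln 2" using l2 L400 by (intro mult_left_mono) auto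
            then show ?thesis using L400 by linarith
          qed
          ultimately show ?thesis by (simp add: L_def n_def algebra_simps)
        qed
        have mean: "mean_extinction 2 (metafunnel k l m) \<ge> 1 / (6 * 2 ^ (k+2))" by (rule mean_C[OF C(1) m2 H])
        have lnm: "ln (real m) \<ge> x / 2" using C(2) m by (subst ln_ge_iff) auto
        have "ln (real m ^ k) \<le> L"
        proof -
          have "real (m ^ k) \<le> real n" using n_ge(3) by (simp add: n_def)
          then have "real m ^ k \<le> real n" by simp
          moreover have "real m ^ k > 0" using m by simp
          ultimately show ?thesis unfolding L_def by (rule ln_mono)
        qed
        then have "real k * ln (real m) \<le> L" using m by (simp add: ln_realpow)
        moreover have "real k * (x / 2) \<le> real k * ln (real m)" using lnm by (intro mult_left_mono) auto
        ultimately have "real k * (x / 2) \<le> x * x / 4" using x2 by linarith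
        then have "real k * (x / 2) \<le> (x / 2) * (x / 2)" by simp
        then have kx: "real k \<le> x / 2" using x20 mult_le_cancel_right_pos[of "x/2" "real k" "x/2"] by simp
        have "(2::real) ^ (k+2) \<le> exp 1 ^ (k+2)" using exp_facts(1) by (intro power_mono) auto
        also have "\<dots> = exp (real (k+2))" using exp_of_nat_mult[of "k+2" "1::real"] by simp
        finally have p2: "(2::real) ^ (k+2) \<le> exp (real k + 2)" by (simp add: add.commute)
        have "6 * 2 ^ (k+2) \<le> exp 3 * exp (real k + 2)" using exp_facts(2) p2 by (intro mult_mono) auto
        also have "\<dots> = exp (real k + 5)" by (simp flip: exp_add)
        also have "\<dots> < exp x" using kx x20 by simp
        finally have "6 * 2 ^ (k+2) < exp x" .
        then have "1 / (6 * 2 ^ (k+2)) > 1 / exp x" by (intro divide_strict_left_mono) auto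
        then show ?thesis using mean emx by linarith
      qed
    qed
    show "mean_extinction 2 (metafunnel k l m) > real (card (fst (metafunnel k l m))) powr
        (- (1 / (ln (real (card (fst (metafunnel k l m)))) powr \<epsilon>)))"
      using main zeta unfolding nV L_def by linarith
  qed
qed

theorem theorem1p10:
  fixes \<epsilon> :: real
  assumes "\<epsilon> < 1/2"
  shows "\<not> (\<exists>\<Upsilon> :: (nat \<times> nat \<times> nat) digraph set.
             infinite \<Upsilon> \<and> (\<forall>G\<in>\<Upsilon>. is_metafunnel G) \<and>
             up_to_fixating (\<lambda>r n. real n powr (- (1 / (ln (real n) powr \<epsilon>)))) \<Upsilon>)"
proof
  assume "\<exists>\<Upsilon> :: (nat \<times> nat \<times> nat) digraph set.
             infinite \<Upsilon> \<and> (\<forall>G\<in>\<Upsilon>. is_metafunnel G) \<and>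
             up_to_fixating (\<lambda>r n. real n powr (- (1 / (ln (real n) powr \<epsilon>)))) \<Upsilon>"
  then obtain \<Upsilon> :: "(nat \<times> nat \<times> nat) digraph set" where inf: "infinite \<Upsilon>"
    and mfs: "\<forall>G\<in>\<Upsilon>. is_metafunnel G"
    and up: "up_to_fixating (\<lambda>r n. real n powr (- (1 / (ln (real n) powr \<epsilon>)))) \<Upsilon>" by blast
  have A: "\<forall>r>1. \<exists>n0. \<forall>G\<in>\<Upsilon>. card (fst G) \<ge> n0 \<longrightarrow>
      mean_extinction r G \<le> real (card (fst G)) powr (- (1 / (ln (real (card (fst G))) powr \<epsilon>)))"
    using up unfolding up_to_fixating_def by simp
  have two: "(2::real) > 1" by simp
  from A[rule_format, OF two] obtain n0 where n0: "\<forall>G\<in>\<Upsilon>. card (fst G) \<ge> n0 \<longrightarrow>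
      mean_extinction 2 G \<le> real (card (fst G)) powr (- (1 / (ln (real (card (fst G))) powr \<epsilon>)))"
    by blast
  obtain N where N: "\<forall>k l m. 0 < k \<longrightarrow> 0 < l \<longrightarrow> 0 < m \<longrightarrow> N \<le> card (fst (metafunnel k l m)) \<longrightarrow>
     mean_extinction 2 (metafunnel k l m) > real (card (fst (metafunnel k l m))) powr
        (- (1 / (ln (real (card (fst (metafunnel k l m)))) powr \<epsilon>)))"
    using key[OF assms] by blast
  define M where "M = max n0 N"
  have "finite {G. is_metafunnel G \<and> card (fst G) < M}" by (rule finite_small)
  moreover have "\<Upsilon> \<subseteq> {G. is_metafunnel G \<and> card (fst G) < M} \<union> {G\<in>\<Upsilon>. card (fst G) \<ge> M}"
    using mfs by auto
  ultimately have "{G\<in>\<Upsilon>. card (fst G) \<ge> M} \<noteq> {}"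
  proof (intro notI)
    assume fin: "finite {G. is_metafunnel G \<and> card (fst G) < M}"
      and sub: "\<Upsilon> \<subseteq> {G. is_metafunnel G \<and> card (fst G) < M} \<union> {G\<in>\<Upsilon>. card (fst G) \<ge> M}"
      and e: "{G\<in>\<Upsilon>. card (fst G) \<ge> M} = {}"
    have "\<Upsilon> \<subseteq> {G. is_metafunnel G \<and> card (fst G) < M}" using sub e by blast
    then have "finite \<Upsilon>" using fin by (rule finite_subset)
    then show False using inf by simp
  qed
  then obtain G where G: "G \<in> \<Upsilon>" "card (fst G) \<ge> M" by blast
  obtain k l m where Gk: "G = metafunnel k l m" "0 < k" "0 < l" "0 < m"
    using mfs G(1) by (auto simp: is_metafunnel_def)
  have "mean_extinction 2 G \<le> real (card (fst G)) powr (- (1 / (ln (real (card (fst G))) powr \<epsilon>)))"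
    using n0 G by (auto simp: M_def)
  moreover have "mean_extinction 2 G > real (card (fst G)) powr (- (1 / (ln (real (card (fst G))) powr \<epsilon>)))"
    using N Gk G(2) by (auto simp: M_def)
  ultimately show False by linarith
qed


end
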